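(* Let $\Gamma$ be a graph of connectivity $1$. Then $\Gamma$ is arc-transitive if and only if: (1) every lobe of $\Gamma$ is arc-transitive; (2) the lobes of $\Gamma$ are pairwise isomorphic; and (3) all vertices of $\Gamma$ lie in the same number of lobes.
   Context: All graphs are simple, connected, and finite or countably infinite. For edges $e_1,e_2$ write $e_1\cong e_2$ if $e_1=e_2$ or they lie on a common cycle; a lobe is the subgraph induced by an equivalence class (a cut-edge with its ends, or a maximal biconnected subgraph). A connected graph other than $K_2$ has connectivity $1$ iff some vertex lies in at least two lobes. An arc is an ordered pair of adjacent vertices; arc-transitive means the automorphism group acts transitively on arcs. *)

theory Defs
  imports Main "HOL-Library.Countable_Set" "HOL-Library.Equipollence"
begin

definition simple_graph :: "'a set \<Rightarrow> ('a \<Rightarrow> 'a \<Rightarrow> bool) \<Rightarrow> bool" where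
  "simple_graph V E \<longleftrightarrow> (\<forall>x y. E x y \<longrightarrow> x \<in> V \<and> y \<in> V \<and> x \<noteq> y \<and> E y x)"

definition connected_graph :: "'a set \<Rightarrow> ('a \<Rightarrow> 'a \<Rightarrow> bool) \<Rightarrow> bool" where
  "connected_graph V E \<longleftrightarrow> V \<noteq> {} \<and>
     (\<forall>u\<in>V. \<forall>w\<in>V. (\<lambda>x y. x \<in> V \<and> y \<in> V \<and> E x y)\<^sup>*\<^sup>* u w)"

definition connectivity_one :: "'a set \<Rightarrow> ('a \<Rightarrow> 'a \<Rightarrow> bool) \<Rightarrow> bool" where
  "connectivity_one V E \<longleftrightarrow> connected_graph V E \<and> (\<exists>u\<in>V. \<exists>w\<in>V. u \<noteq> w) \<and>
     (\<exists>v\<in>V. \<not> connected_graph (V - {v}) E \<or> (\<exists>w. V - {v} = {w}))"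

definition edges :: "('a \<Rightarrow> 'a \<Rightarrow> bool) \<Rightarrow> 'a set set" where
  "edges E = {{x, y} | x y. E x y}"

definition is_cycle :: "'a set \<Rightarrow> ('a \<Rightarrow> 'a \<Rightarrow> bool) \<Rightarrow> 'a list \<Rightarrow> bool" where
  "is_cycle V E xs \<longleftrightarrow> length xs \<ge> 3 \<and> distinct xs \<and> set xs \<subseteq> V \<and>
     (\<forall>i < length xs. E (xs ! i) (xs ! ((i + 1) mod length xs)))"

definition cycle_edges :: "'a list \<Rightarrow> 'a set set" where
  "cycle_edges xs = {{xs ! i, xs ! ((i + 1) mod length xs)} | i. i < length xs}"

definition edge_equiv :: "'a set \<Rightarrow> ('a \<Rightarrow> 'a \<Rightarrow> bool) \<Rightarrow> 'a set \<Rightarrow> 'a set \<Rightarrow> bool" where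
  "edge_equiv V E e1 e2 \<longleftrightarrow> e1 = e2 \<or>
     (\<exists>c. is_cycle V E c \<and> e1 \<in> cycle_edges c \<and> e2 \<in> cycle_edges c)"

definition lobes :: "'a set \<Rightarrow> ('a \<Rightarrow> 'a \<Rightarrow> bool) \<Rightarrow> 'a set set set" where
  "lobes V E = {{e' \<in> edges E. edge_equiv V E e e'} | e. e \<in> edges E}"

definition lobe_verts :: "'a set set \<Rightarrow> 'a set" where
  "lobe_verts L = \<Union>L"

definition lobe_adj :: "'a set set \<Rightarrow> 'a \<Rightarrow> 'a \<Rightarrow> bool" where
  "lobe_adj L x y \<longleftrightarrow> x \<noteq> y \<and> {x, y} \<in> L"

definition is_automorphism :: "'a set \<Rightarrow> ('a \<Rightarrow> 'a \<Rightarrow> bool) \<Rightarrow> ('a \<Rightarrow> 'a) \<Rightarrow> bool" where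
  "is_automorphism V E f \<longleftrightarrow> bij_betw f V V \<and>
     (\<forall>x\<in>V. \<forall>y\<in>V. E x y \<longleftrightarrow> E (f x) (f y))"

definition arc_transitive :: "'a set \<Rightarrow> ('a \<Rightarrow> 'a \<Rightarrow> bool) \<Rightarrow> bool" where
  "arc_transitive V E \<longleftrightarrow> (\<forall>u v x y. u \<in> V \<and> v \<in> V \<and> E u v \<and> x \<in> V \<and> y \<in> V \<and> E x y \<longrightarrow>
     (\<exists>f. is_automorphism V E f \<and> f u = x \<and> f v = y))"

definition graph_iso :: "'a set \<Rightarrow> ('a \<Rightarrow> 'a \<Rightarrow> bool) \<Rightarrow> 'b set \<Rightarrow> ('b \<Rightarrow> 'b \<Rightarrow> bool) \<Rightarrow> bool" where
  "graph_iso V1 E1 V2 E2 \<longleftrightarrow> (\<exists>f. bij_betw f V1 V2 \<and>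
     (\<forall>x\<in>V1. \<forall>y\<in>V1. E1 x y \<longleftrightarrow> E2 (f x) (f y)))"

end

theory Submission
  imports Defs
begin
fun walk :: "('a \<Rightarrow> 'a \<Rightarrow> bool) \<Rightarrow> 'a list \<Rightarrow> bool" where
  "walk R [] = True"
| "walk R [x] = True"
| "walk R (x # y # xs) = (R x y \<and> walk R (y # xs))"

fun pedges :: "'a list \<Rightarrow> 'a set set" where
  "pedges [] = {}"
| "pedges [x] = {}"
| "pedges (x # y # xs) = insert {x, y} (pedges (y # xs))"

lemma walk_Cons: "walk R (x # xs) \<longleftrightarrow> (xs = [] \<or> (R x (hd xs) \<and> walk R xs))"
  by (cases xs) auto

lemma pedges_Cons: "pedges (x # xs) = (if xs = [] then {} else insert {x, hd xs} (pedges xs))"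
  by (cases xs) auto

lemma walk_append: "walk R (xs @ y # ys) \<longleftrightarrow> walk R (xs @ [y]) \<and> walk R (y # ys)"
proof (induction xs)
  case (Cons x xs)
  then show ?case by (cases xs) auto
qed simp

lemma pedges_append: "pedges (xs @ y # ys) = pedges (xs @ [y]) \<union> pedges (y # ys)"
proof (induction xs)
  case (Cons x xs)
  then show ?case by (cases xs) auto
qed simp

lemma walk_rev: "(\<And>a b. R a b \<Longrightarrow> R b a) \<Longrightarrow> walk R (rev xs) = walk R xs"
proof (induction xs)
  case (Cons x xs)
  show ?case
  proof (cases xs)
    case (Cons y ys)
    have "walk R (rev (x # xs)) = walk R (rev ys @ y # [x])" using Cons by simp
    also have "\<dots> = (walk R (rev ys @ [y]) \<and> R y x)" by (subst walk_append) simp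
    also have "\<dots> = (walk R (rev xs) \<and> R x y)" using Cons Cons.prems by auto
    also have "\<dots> = walk R (x # xs)" using Cons.IH Cons.prems Cons by auto
    finally show ?thesis .
  qed simp
qed simp

lemma pedges_rev: "pedges (rev xs) = pedges xs"
proof (induction xs)
  case (Cons x xs)
  show ?case
  proof (cases xs)
    case (Cons y ys)
    have "pedges (rev (x # xs)) = pedges (rev ys @ y # [x])" using Cons by simp
    also have "\<dots> = pedges (rev ys @ [y]) \<union> {{y,x}}" by (subst pedges_append) simp
    also have "\<dots> = pedges (x # xs)" using Cons.IH Cons by (auto simp: insert_commute)
    finally show ?thesis .
  qed simp
qed simp

lemma walk_nth: "walk R xs \<longleftrightarrow> (\<forall>i. Suc i < length xs \<longrightarrow> R (xs ! i) (xs ! Suc i))"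
proof (induction xs)
  case (Cons x xs)
  show ?case
  proof (cases xs)
    case (Cons y ys)
    show ?thesis
      unfolding Cons walk.simps Cons.IH[unfolded Cons]
    proof safe
      fix i assume "R x y" "\<forall>i. Suc i < length (y # ys) \<longrightarrow> R ((y # ys) ! i) ((y # ys) ! Suc i)"
        "Suc i < length (x # y # ys)"
      then show "R ((x # y # ys) ! i) ((x # y # ys) ! Suc i)" by (cases i) auto
    next
      assume "\<forall>i. Suc i < length (x # y # ys) \<longrightarrow> R ((x # y # ys) ! i) ((x # y # ys) ! Suc i)"
      from this[rule_format, of 0] show "R x y" by simp
    next
      fix i assume "\<forall>i. Suc i < length (x # y # ys) \<longrightarrow> R ((x # y # ys) ! i) ((x # y # ys) ! Suc i)"
        "Suc i < length (y # ys)"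
      then show "R ((y # ys) ! i) ((y # ys) ! Suc i)" by (metis Suc_mono length_Cons nth_Cons_Suc)
    qed
  qed simp
qed simp

lemma pedges_nth: "pedges xs = {{xs ! i, xs ! Suc i} | i. Suc i < length xs}"
proof (induction xs)
  case (Cons x xs)
  show ?case
  proof (cases xs)
    case (Cons y ys)
    have "{{(x#y#ys) ! i, (x#y#ys) ! Suc i} | i. Suc i < length (x#y#ys)}
        = insert {x,y} {{(y#ys) ! i, (y#ys) ! Suc i} | i. Suc i < length (y#ys)}"
    proof (rule set_eqI, rule iffI)
      fix e assume "e \<in> {{(x#y#ys) ! i, (x#y#ys) ! Suc i} | i. Suc i < length (x#y#ys)}"
      then obtain i where "e = {(x#y#ys) ! i, (x#y#ys) ! Suc i}" "Suc i < length (x#y#ys)" by blast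
      then show "e \<in> insert {x,y} {{(y#ys) ! i, (y#ys) ! Suc i} | i. Suc i < length (y#ys)}"
        by (cases i) auto
    next
      fix e assume "e \<in> insert {x,y} {{(y#ys) ! i, (y#ys) ! Suc i} | i. Suc i < length (y#ys)}"
      then show "e \<in> {{(x#y#ys) ! i, (x#y#ys) ! Suc i} | i. Suc i < length (x#y#ys)}"
      proof
        assume "e = {x,y}" then show ?thesis by (intro CollectI exI[of _ 0]) simp
      next
        assume "e \<in> {{(y#ys) ! i, (y#ys) ! Suc i} | i. Suc i < length (y#ys)}"
        then obtain i where "e = {(y#ys) ! i, (y#ys) ! Suc i}" "Suc i < length (y#ys)" by blast
        then show ?thesis by (intro CollectI exI[of _ "Suc i"]) simp
      qed
    qed
    then show ?thesis using Cons.IH unfolding Cons by simp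
  qed simp
qed simp

lemma closed_nth:
  assumes "c \<noteq> []" "i < length c"
  shows "(c @ [hd c]) ! i = c ! i" "(c @ [hd c]) ! Suc i = c ! ((i + 1) mod length c)"
proof -
  show "(c @ [hd c]) ! i = c ! i" using assms by (simp add: nth_append)
  show "(c @ [hd c]) ! Suc i = c ! ((i + 1) mod length c)"
  proof (cases "Suc i < length c")
    case True then show ?thesis by (simp add: nth_append)
  next
    case False
    then have "Suc i = length c" using assms by simp
    then show ?thesis using assms by (simp add: nth_append hd_conv_nth)
  qed
qed

lemma is_cycle_alt:
  assumes "c \<noteq> []"
  shows "is_cycle V E c \<longleftrightarrow> length c \<ge> 3 \<and> distinct c \<and> set c \<subseteq> V \<and> walk E (c @ [hd c])"
proof -
  have "walk E (c @ [hd c]) \<longleftrightarrow> (\<forall>i < length c. E (c ! i) (c ! ((i + 1) mod length c)))"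
    unfolding walk_nth using closed_nth[OF assms] by auto
  then show ?thesis unfolding is_cycle_def by blast
qed

lemma cycle_edges_alt:
  assumes "c \<noteq> []"
  shows "cycle_edges c = pedges (c @ [hd c])"
proof -
  have h: "\<And>i. i < length c \<Longrightarrow> {(c@[hd c])!i, (c@[hd c])!Suc i} = {c!i, c!((i+1) mod length c)}"
    using closed_nth[OF assms] by simp
  show ?thesis unfolding pedges_nth cycle_edges_def
  proof (rule set_eqI, rule iffI)
    fix e assume "e \<in> {{c ! i, c ! ((i + 1) mod length c)} |i. i < length c}"
    then obtain i where "e = {c ! i, c ! ((i + 1) mod length c)}" "i < length c" by blast
    then show "e \<in> {{(c @ [hd c]) ! i, (c @ [hd c]) ! Suc i} |i. Suc i < length (c @ [hd c])}"
      using h[of i] by (intro CollectI exI[of _ i]) simp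
  next
    fix e assume "e \<in> {{(c @ [hd c]) ! i, (c @ [hd c]) ! Suc i} |i. Suc i < length (c @ [hd c])}"
    then obtain i where "e = {(c @ [hd c]) ! i, (c @ [hd c]) ! Suc i}" "Suc i < length (c @ [hd c])" by blast
    then show "e \<in> {{c ! i, c ! ((i + 1) mod length c)} |i. i < length c}"
      using h[of i] by (intro CollectI exI[of _ i]) simp
  qed
qed

lemma cycle_rotate1:
  assumes "is_cycle V E (x # xs)"
  shows "is_cycle V E (xs @ [x]) \<and> cycle_edges (xs @ [x]) = cycle_edges (x # xs)"
proof (cases xs)
  case Nil
  then show ?thesis using assms by simp
next
  case (Cons y ys)
  have c: "length (x # xs) \<ge> 3" "distinct (x # xs)" "set (x # xs) \<subseteq> V" "walk E (x # y # ys @ [x])"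
    using is_cycle_alt[of "x # xs" V E] assms Cons by auto
  have "walk E ((y # ys) @ x # [y])"
    by (subst walk_append) (use c(4) in simp)
  then have w: "walk E ((y # ys @ [x]) @ [hd (y # ys @ [x])])" by simp
  have "pedges ((y # ys) @ x # [y]) = pedges (x # y # ys @ [x])"
    by (subst pedges_append) (auto simp: insert_commute)
  then have p: "pedges ((y # ys @ [x]) @ [hd (y # ys @ [x])]) = pedges ((x # xs) @ [hd (x # xs)])"
    using Cons by simp
  have "is_cycle V E (y # ys @ [x])"
    using c w Cons by (subst is_cycle_alt) auto
  moreover have "cycle_edges (y # ys @ [x]) = cycle_edges (x # xs)"
    using p by (simp add: cycle_edges_alt del: append.simps append_Cons)
  ultimately show ?thesis using Cons by simp
qed

lemma cycle_swap:
  assumes "is_cycle V E (A @ B)"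
  shows "is_cycle V E (B @ A) \<and> cycle_edges (B @ A) = cycle_edges (A @ B)"
  using assms
proof (induction A arbitrary: B)
  case (Cons a A)
  have "is_cycle V E (A @ B @ [a]) \<and> cycle_edges (A @ B @ [a]) = cycle_edges (a # A @ B)"
    using cycle_rotate1[of V E a "A @ B"] Cons.prems by simp
  then have "is_cycle V E ((B @ [a]) @ A) \<and> cycle_edges ((B @ [a]) @ A) = cycle_edges (a # A @ B)"
    using Cons.IH[of "B @ [a]"] by simp
  then show ?case by simp
qed simp

lemma walk_prefix: "walk R (xs @ ys) \<Longrightarrow> walk R xs"
proof (induction xs)
  case (Cons x xs)
  then show ?case by (cases xs) auto
qed simp

lemma walk_suffix: "walk R (xs @ ys) \<Longrightarrow> walk R ys"
proof (induction xs)
  case (Cons x xs)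
  then show ?case by (cases xs) (auto simp: walk_Cons)
qed simp

lemma pedges_prefix: "pedges xs \<subseteq> pedges (xs @ ys)"
proof (induction xs)
  case (Cons x xs)
  then show ?case by (cases xs) auto
qed simp

lemma pedges_suffix: "pedges ys \<subseteq> pedges (xs @ ys)"
proof (induction xs)
  case (Cons x xs)
  then show ?case by (cases xs) (auto simp: pedges_Cons)
qed simp

lemma pedges_join: "xs \<noteq> [] \<Longrightarrow> {last xs, y} \<in> pedges (xs @ y # ys)"
proof (induction xs)
  case (Cons x xs)
  then show ?case by (cases xs) auto
qed simp

lemma pedges_split: "e \<in> pedges xs \<Longrightarrow> \<exists>U a b W. xs = U @ a # b # W \<and> e = {a, b}"
proof (induction xs rule: pedges.induct)
  case (3 x y xs)
  then show ?case
    by simp (metis append_Cons append_Nil)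
qed auto

lemma walk_split_E: "walk R (U @ a # b # W) \<Longrightarrow> R a b"
  using walk_suffix[of R U "a # b # W"] by simp

lemma pedges_set: "e \<in> pedges xs \<Longrightarrow> \<exists>a b. e = {a, b} \<and> a \<in> set xs \<and> b \<in> set xs"
proof -
  assume "e \<in> pedges xs"
  then obtain U a b W where "xs = U @ a # b # W" "e = {a, b}" using pedges_split by blast
  then show ?thesis by (intro exI[of _ a] exI[of _ b]) simp
qed

lemma cycle_walk: "is_cycle V E c \<Longrightarrow> walk E c"
  using walk_prefix[of E c] by (cases c) (auto simp: is_cycle_alt)

lemma cycle_edges_set: "is_cycle V E c \<Longrightarrow> e \<in> cycle_edges c \<Longrightarrow>
   \<exists>a b. e = {a, b} \<and> a \<in> set c \<and> b \<in> set c \<and> E a b"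
proof -
  assume c: "is_cycle V E c" and e: "e \<in> cycle_edges c"
  have ne: "c \<noteq> []" using c by (auto simp: is_cycle_def)
  have w: "walk E (c @ [hd c])" using c ne by (simp add: is_cycle_alt)
  obtain U a b W where u: "c @ [hd c] = U @ a # b # W" "e = {a, b}"
    using e ne pedges_split by (metis cycle_edges_alt)
  have "set (c @ [hd c]) = set c" using ne by auto
  moreover have "a \<in> set (c @ [hd c])" "b \<in> set (c @ [hd c])" unfolding u(1) by simp_all
  ultimately have "a \<in> set c" "b \<in> set c" by simp_all
  moreover have "E a b" using w u walk_split_E by metis
  ultimately show ?thesis using u by blast
qed

lemma make_cycle:
  assumes "Q \<noteq> []" "walk E (Q @ I @ [hd Q])" "distinct (Q @ I)" "length (Q @ I) \<ge> 3" "set (Q @ I) \<subseteq> V"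
  shows "is_cycle V E (Q @ I) \<and> cycle_edges (Q @ I) = pedges (Q @ I @ [hd Q])"
  using assms by (simp add: is_cycle_alt cycle_edges_alt)

locale sg =
  fixes V :: "'a set" and E :: "'a \<Rightarrow> 'a \<Rightarrow> bool"
  assumes simple: "simple_graph V E"
begin

lemma E_sym: "E a b \<Longrightarrow> E b a" and E_V: "E a b \<Longrightarrow> a \<in> V" "E a b \<Longrightarrow> b \<in> V"
  and E_irr: "E a b \<Longrightarrow> a \<noteq> b"
  using simple unfolding simple_graph_def by blast+

lemma ear:
  assumes c1: "is_cycle V E c1" and w: "walk E (p # I @ [q])" and d: "distinct (p # I @ [q])"
    and pc: "p \<in> set c1" and qc: "q \<in> set c1" and Ic: "set I \<inter> set c1 = {}" and IV: "set I \<subseteq> V"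
    and ne: "I = [] \<Longrightarrow> {p, q} \<notin> cycle_edges c1" and e: "e \<in> cycle_edges c1"
  shows "\<exists>c. is_cycle V E c \<and> e \<in> cycle_edges c \<and> pedges (p # I @ [q]) \<subseteq> cycle_edges c"
proof -
  have pq: "p \<noteq> q" using d by auto
  obtain A B where c1AB: "c1 = A @ p # B" using pc by (meson split_list)
  have c1': "is_cycle V E (p # B @ A)" "cycle_edges (p # B @ A) = cycle_edges c1"
    using cycle_swap[of V E A "p # B"] c1 c1AB by auto
  have "q \<in> set (B @ A)" using qc pq c1AB by auto
  then obtain X Y where XY: "B @ A = X @ q # Y" by (meson split_list)
  let ?c = "p # X @ q # Y"
  have cyc: "is_cycle V E ?c" "cycle_edges ?c = cycle_edges c1" using c1' XY by auto
  have cw: "walk E (?c @ [p])" using cyc by (simp add: is_cycle_alt)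
  have cd: "distinct ?c" and cV: "set ?c \<subseteq> V" using cyc by (auto simp: is_cycle_def)
  have "set (X @ q # Y) = set (B @ A)" using XY by simp
  then have cset: "set ?c = set c1" unfolding c1AB by auto
  have ce: "cycle_edges ?c = pedges (p # X @ [q]) \<union> pedges (q # Y @ [p])"
    using cyc pedges_append[of "p # X" q "Y @ [p]"] by (simp add: cycle_edges_alt)
  have w1: "walk E (p # X @ [q])" "walk E (q # Y @ [p])"
    using cw walk_append[of E "p # X" q "Y @ [p]"] by auto
  have wI: "walk E (q # rev I @ [p])"
    using w walk_rev[of E "p # I @ [q]"] E_sym by simp
  have dI: "distinct I" "p \<notin> set I" "q \<notin> set I" using d by auto
  have IV': "set (rev I) \<subseteq> V" using IV by simp
  from e ce cyc consider "e \<in> pedges (p # X @ [q])" | "e \<in> pedges (q # Y @ [p])" by auto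
  then show ?thesis
  proof cases
    case 1
    let ?n = "p # X @ q # rev I"
    have "walk E ((p # X) @ q # (rev I @ [p]))"
      using w1(1) wI by (subst walk_append) simp
    then have nw: "walk E (?n @ [hd ?n])" by simp
    have nd: "distinct ?n" using cd dI Ic cset by auto
    have nl: "length ?n \<ge> 3"
    proof (cases "I = []")
      case True
      have "X \<noteq> []"
      proof
        assume "X = []"
        then have "{p, q} \<in> cycle_edges c1" using ce cyc by auto
        then show False using ne True by simp
      qed
      then show ?thesis by (cases X) auto
    qed (cases I; auto)
    have nV: "set ?n \<subseteq> V" using cV IV by auto
    have "is_cycle V E ?n \<and> cycle_edges ?n = pedges (?n @ [hd ?n])"
      using make_cycle[of "?n" E "[]" V] nw nd nl nV by simp
    moreover have "pedges (?n @ [hd ?n]) = pedges (p # X @ [q]) \<union> pedges (q # rev I @ [p])"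
      using pedges_append[of "p # X" q "rev I @ [p]"] by simp
    moreover have "pedges (q # rev I @ [p]) = pedges (p # I @ [q])"
      using pedges_rev[of "p # I @ [q]"] by simp
    ultimately show ?thesis using 1 by blast
  next
    case 2
    let ?n = "q # Y @ p # I"
    have "walk E ((q # Y) @ p # (I @ [q]))"
      using w1(2) w by (subst walk_append) simp
    then have nw: "walk E (?n @ [hd ?n])" by simp
    have nd: "distinct ?n" using cd dI Ic cset by auto
    have nl: "length ?n \<ge> 3"
    proof (cases "I = []")
      case True
      have "Y \<noteq> []"
      proof
        assume "Y = []"
        then have "{q, p} \<in> cycle_edges c1" using ce cyc by auto
        then show False using ne True by (simp add: insert_commute)
      qed
      then show ?thesis by (cases Y) auto
    qed (cases I; auto)
    have nV: "set ?n \<subseteq> V" using cV IV by auto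
    have "is_cycle V E ?n \<and> cycle_edges ?n = pedges (?n @ [hd ?n])"
      using make_cycle[of "?n" E "[]" V] nw nd nl nV by simp
    moreover have "pedges (?n @ [hd ?n]) = pedges (q # Y @ [p]) \<union> pedges (p # I @ [q])"
      using pedges_append[of "q # Y" p "I @ [q]"] by simp
    ultimately show ?thesis using 2 by blast
  qed
qed

lemma cycle_edge_rot:
  assumes c: "is_cycle V E c" and e: "e \<in> cycle_edges c"
  shows "\<exists>a b M. e = {a, b} \<and> is_cycle V E (a # M @ [b]) \<and> cycle_edges (a # M @ [b]) = cycle_edges c"
proof -
  have ne: "c \<noteq> []" and l3: "length c \<ge> 3" using c by (auto simp: is_cycle_def)
  obtain U x y W where u: "c @ [hd c] = U @ x # y # W" "e = {x, y}"
    using e ne pedges_split by (metis cycle_edges_alt)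
  show ?thesis
  proof (cases W rule: rev_cases)
    case Nil
    then have cU: "c = U @ [x]" "hd c = y" using u(1) by auto
    then obtain U' where "U = y # U'" using l3 by (cases U) auto
    then have "c = y # U' @ [x]" using cU by simp
    moreover have "e = {y, x}" using u(2) by blast
    ultimately show ?thesis using c by blast
  next
    case (snoc W' h)
    have "c @ [hd c] = (U @ x # y # W') @ [h]" by (subst u(1)) (simp add: snoc)
    then have "c = U @ x # y # W'" by (rule append1_eq_conv[THEN iffD1, THEN conjunct1])
    then have "is_cycle V E ((y # W') @ (U @ [x])) \<and> cycle_edges ((y # W') @ (U @ [x])) = cycle_edges c"
      using cycle_swap[of V E "U @ [x]" "y # W'"] c by simp
    moreover have "e = {y, x}" using u(2) by blast
    ultimately show ?thesis by (metis append.assoc append_Cons)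
  qed
qed

lemma cycle_trans:
  assumes c1: "is_cycle V E c1" "e1 \<in> cycle_edges c1" "e2 \<in> cycle_edges c1"
    and c2: "is_cycle V E c2" "e2 \<in> cycle_edges c2" "e3 \<in> cycle_edges c2"
  shows "\<exists>c. is_cycle V E c \<and> e1 \<in> cycle_edges c \<and> e3 \<in> cycle_edges c"
proof (cases "e3 \<in> cycle_edges c1")
  case True
  then show ?thesis using c1 by blast
next
  case False
  obtain t s M where ts: "e3 = {t, s}" "is_cycle V E (t # M @ [s])"
    "cycle_edges (t # M @ [s]) = cycle_edges c2"
    using cycle_edge_rot[OF c2(1) c2(3)] by blast
  let ?P = "t # M @ [s]"
  have "cycle_edges ?P = pedges ((t # M) @ s # [t])" using ts(2) by (simp add: cycle_edges_alt)
  also have "\<dots> = pedges ?P \<union> {{s, t}}" by (subst pedges_append) simp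
  finally have ceP: "cycle_edges c2 = pedges ?P \<union> {{s, t}}" using ts by simp
  have "e2 \<noteq> e3" using False c1 by blast
  then have "e2 \<in> pedges ?P" using ceP c2 ts(1) by (auto simp: insert_commute)
  then obtain a b where ab: "e2 = {a, b}" "a \<in> set ?P" "b \<in> set ?P" using pedges_set by blast
  obtain a' b' where ab': "e2 = {a', b'}" "a' \<in> set c1" "b' \<in> set c1" "E a' b'"
    using cycle_edges_set[OF c1(1) c1(3)] by blast
  have abX: "a \<in> set c1" "b \<in> set c1" "a \<noteq> b" using ab ab' E_irr by (auto simp: doubleton_eq_iff)
  have "\<exists>z\<in>set ?P. z \<in> set c1" using ab abX by blast
  then obtain A1 p B1 where P1: "?P = A1 @ p # B1" "p \<in> set c1" "\<forall>z\<in>set A1. z \<notin> set c1"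
    using split_list_first_prop[of ?P "\<lambda>z. z \<in> set c1"] by blast
  have "\<exists>z\<in>set B1. z \<in> set c1"
  proof -
    have "a \<in> set (A1 @ p # B1)" "b \<in> set (A1 @ p # B1)" using ab P1 by simp_all
    then show ?thesis using P1(3) abX by auto
  qed
  then obtain D q C where B1: "B1 = D @ q # C" "q \<in> set c1" "\<forall>z\<in>set C. z \<notin> set c1"
    using split_list_last_prop[of B1 "\<lambda>z. z \<in> set c1"] by blast
  have P2: "?P = (A1 @ p # D) @ (q # C)" using P1 B1 by simp
  let ?c3 = "q # C @ A1 @ p # D"
  have c3: "is_cycle V E ?c3" using cycle_swap[of V E "A1 @ p # D" "q # C"] ts(2) P2 by simp
  have c3eq: "?c3 = (q # (C @ A1) @ [p]) @ D" by simp
  have w: "walk E (q # (C @ A1) @ [p])" using cycle_walk[OF c3] walk_prefix c3eq by metis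
  have d3: "distinct ?c3" and V3: "set ?c3 \<subseteq> V" using c3 by (auto simp: is_cycle_def)
  have d: "distinct (q # (C @ A1) @ [p])" using d3 by auto
  have dP: "distinct ?P" using ts(2) by (auto simp: is_cycle_def)
  have pq: "q \<noteq> p" using dP P1 B1 by auto
  have IX: "set (C @ A1) \<inter> set c1 = {}" using P1(3) B1(3) by auto
  have IV: "set (C @ A1) \<subseteq> V" using V3 by auto
  have lastP: "last ?P = last (q # C)" using P2 by (metis last_appendR list.distinct(1))
  have hdP: "hd ?P = hd (A1 @ [p])" using P1 by (cases A1) auto
  have ne: "{q, p} \<notin> cycle_edges c1" if "C @ A1 = []"
  proof -
    have "last ?P = q" "hd ?P = p" using lastP hdP that by auto
    then have "{q, p} = e3" using ts(1) by (auto simp: insert_commute)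
    then show ?thesis using False by simp
  qed
  obtain c where c: "is_cycle V E c" "e1 \<in> cycle_edges c" "pedges (q # (C @ A1) @ [p]) \<subseteq> cycle_edges c"
    using ear[OF c1(1) w d B1(2) P1(2) IX IV ne c1(2)] by blast
  have "{last (q # C), hd (A1 @ [p])} \<in> pedges ((q # C) @ hd (A1 @ [p]) # tl (A1 @ [p]))"
    by (rule pedges_join) simp
  moreover have "(q # C) @ hd (A1 @ [p]) # tl (A1 @ [p]) = q # (C @ A1) @ [p]"
    by (cases A1) auto
  ultimately have "{s, t} \<in> pedges (q # (C @ A1) @ [p])" using lastP hdP by simp
  then have "e3 \<in> cycle_edges c" using c(3) ts(1) by (auto simp: insert_commute)
  then show ?thesis using c by blast
qed

lemma equiv_trans:
  assumes "edge_equiv V E e1 e2" "edge_equiv V E e2 e3"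
  shows "edge_equiv V E e1 e3"
  using assms cycle_trans unfolding edge_equiv_def by metis

lemma equiv_sym: "edge_equiv V E e1 e2 \<Longrightarrow> edge_equiv V E e2 e1"
  unfolding edge_equiv_def by blast

end

lemma walk_mono:
  assumes "\<And>x y. R x y \<Longrightarrow> S x y"
  shows "walk R xs \<Longrightarrow> walk S xs"
proof (induction xs)
  case (Cons x xs)
  then show ?case using assms by (cases xs) auto
qed simp

lemma walk_rtranclp: "walk R xs \<Longrightarrow> xs \<noteq> [] \<Longrightarrow> R\<^sup>*\<^sup>* (hd xs) (last xs)"
proof (induction xs)
  case (Cons x xs)
  show ?case
  proof (cases xs)
    case (Cons y ys)
    then have "R x y" "R\<^sup>*\<^sup>* y (last xs)" using Cons.prems Cons.IH by auto
    then show ?thesis using Cons by (auto intro: converse_rtranclp_into_rtranclp)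
  qed simp
qed simp

lemma rtranclp_path:
  assumes "R\<^sup>*\<^sup>* a b"
  shows "\<exists>xs. walk R xs \<and> distinct xs \<and> xs \<noteq> [] \<and> hd xs = a \<and> last xs = b"
  using assms
proof (induction rule: rtranclp_induct)
  case base
  then show ?case by (intro exI[of _ "[a]"]) simp
next
  case (step y z)
  then obtain xs where xs: "walk R xs" "distinct xs" "xs \<noteq> []" "hd xs = a" "last xs = y" by blast
  show ?case
  proof (cases "z \<in> set xs")
    case True
    then obtain ys zs where "xs = ys @ z # zs" by (meson split_list)
    then show ?thesis using xs walk_prefix[of R "ys @ [z]" zs]
      by (intro exI[of _ "ys @ [z]"]) (auto simp: hd_append split: if_splits)
  next
    case False
    obtain xs' where "xs = xs' @ [y]" using xs by (metis append_butlast_last_id)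
    then have "walk R (xs' @ y # [z])" using xs step(2) by (subst walk_append) simp
    then show ?thesis using xs False \<open>xs = xs' @ [y]\<close>
      by (intro exI[of _ "xs @ [z]"]) (auto simp: hd_append)
  qed
qed

lemma rtranclp_sym:
  assumes "\<And>x y. R x y \<Longrightarrow> R y x" "R\<^sup>*\<^sup>* a b"
  shows "R\<^sup>*\<^sup>* b a"
  using assms(2)
  by (induction rule: rtranclp_induct) (auto intro: converse_rtranclp_into_rtranclp assms(1))

context sg
begin

definition cls :: "'a set \<Rightarrow> 'a set set" where
  "cls e = {e' \<in> edges E. edge_equiv V E e e'}"

abbreviation LOB where "LOB \<equiv> lobes V E"

definition RN :: "'a set set \<Rightarrow> 'a \<Rightarrow> 'a \<Rightarrow> bool" where
  "RN L x y \<longleftrightarrow> E x y \<and> {x, y} \<notin> L"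

lemma edges_iff: "{x, y} \<in> edges E \<longleftrightarrow> E x y"
proof
  assume "{x, y} \<in> edges E"
  then obtain a b where ab: "{x, y} = {a, b}" "E a b" unfolding edges_def by blast
  then have "a \<noteq> b" using E_irr by blast
  then show "E x y" using ab E_sym by (auto simp: doubleton_eq_iff)
qed (auto simp: edges_def)

lemma edgesE: "e \<in> edges E \<Longrightarrow> \<exists>x y. e = {x, y} \<and> E x y"
  unfolding edges_def by blast

lemma equiv_refl: "edge_equiv V E e e"
  unfolding edge_equiv_def by simp

lemma cls_lobe: "e \<in> edges E \<Longrightarrow> cls e \<in> LOB"
  unfolding lobes_def cls_def by blast

lemma cls_self: "e \<in> edges E \<Longrightarrow> e \<in> cls e"
  unfolding cls_def using equiv_refl by blast

lemma lobe_cls: "L \<in> LOB \<Longrightarrow> e \<in> L \<Longrightarrow> L = cls e"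
proof -
  assume "L \<in> LOB" "e \<in> L"
  then obtain e0 where L: "L = cls e0" "e0 \<in> edges E" unfolding lobes_def cls_def by blast
  then have e: "edge_equiv V E e0 e" "e \<in> edges E" using \<open>e \<in> L\<close> unfolding cls_def by auto
  show "L = cls e" unfolding L cls_def using e equiv_trans equiv_sym by blast
qed

lemma lobe_sub: "L \<in> LOB \<Longrightarrow> L \<subseteq> edges E"
  unfolding lobes_def by blast

lemma lobe_ex: "L \<in> LOB \<Longrightarrow> \<exists>x y. {x, y} \<in> L \<and> E x y"
proof -
  assume "L \<in> LOB"
  then obtain e0 where L: "L = cls e0" "e0 \<in> edges E" unfolding lobes_def cls_def by blast
  then show ?thesis using cls_self edgesE by blast
qed

lemma lobes_disj: "L \<in> LOB \<Longrightarrow> M \<in> LOB \<Longrightarrow> e \<in> L \<Longrightarrow> e \<in> M \<Longrightarrow> L = M"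
  using lobe_cls by metis

lemma lobe_adj_iff: "L \<in> LOB \<Longrightarrow> lobe_adj L x y \<longleftrightarrow> {x, y} \<in> L"
  unfolding lobe_adj_def using lobe_sub edges_iff E_irr by blast

lemma lobe_adjE: "L \<in> LOB \<Longrightarrow> lobe_adj L x y \<Longrightarrow> E x y \<and> {x, y} \<in> L"
  unfolding lobe_adj_def using lobe_sub edges_iff by blast

lemma lv_iff: "L \<in> LOB \<Longrightarrow> z \<in> lobe_verts L \<longleftrightarrow> (\<exists>w. {z, w} \<in> L)"
proof
  assume "L \<in> LOB" "z \<in> lobe_verts L"
  then obtain e where "e \<in> L" "z \<in> e" unfolding lobe_verts_def by blast
  moreover obtain x y where "e = {x, y}" using \<open>e \<in> L\<close> \<open>L \<in> LOB\<close> lobe_sub edgesE by blast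
  ultimately show "\<exists>w. {z, w} \<in> L" by (auto simp: insert_commute)
qed (auto simp: lobe_verts_def)

lemma lv_E: "L \<in> LOB \<Longrightarrow> {z, w} \<in> L \<Longrightarrow> E z w"
  using lobe_sub edges_iff by blast

lemma lv_V: "L \<in> LOB \<Longrightarrow> lobe_verts L \<subseteq> V"
  using lv_iff lv_E E_V by blast

lemma lv_other: "L \<in> LOB \<Longrightarrow> z \<in> lobe_verts L \<Longrightarrow> \<exists>w. w \<in> lobe_verts L \<and> w \<noteq> z \<and> {z, w} \<in> L"
proof -
  assume L: "L \<in> LOB" "z \<in> lobe_verts L"
  then obtain w where "{z, w} \<in> L" using lv_iff by blast
  moreover then have "w \<noteq> z" using lv_E E_irr L by blast
  moreover have "w \<in> lobe_verts L" using \<open>{z, w} \<in> L\<close> unfolding lobe_verts_def by blast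
  ultimately show ?thesis by blast
qed

lemma pedges_walk_E: "walk E xs \<Longrightarrow> f \<in> pedges xs \<Longrightarrow> f \<in> edges E"
  using pedges_split walk_split_E edges_iff by metis

lemma cycle_cls: "is_cycle V E c \<Longrightarrow> e0 \<in> cycle_edges c \<Longrightarrow> f \<in> cycle_edges c \<Longrightarrow> f \<in> cls e0"
  unfolding cls_def edge_equiv_def using cycle_edges_set edges_iff by blast

lemma walk_lobe_adj: "L \<in> LOB \<Longrightarrow> walk (lobe_adj L) xs \<Longrightarrow> walk E xs \<and> pedges xs \<subseteq> L"
proof (induction xs rule: pedges.induct)
  case (3 x y xs)
  then show ?case using lobe_adjE by auto
qed auto

lemma walk_in_lobe: "L \<in> LOB \<Longrightarrow> walk E xs \<Longrightarrow> pedges xs \<subseteq> L \<Longrightarrow> walk (lobe_adj L) xs"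
proof (induction xs rule: pedges.induct)
  case (3 x y xs)
  then show ?case using lobe_adj_iff by auto
qed auto

lemma cycle_path:
  assumes c: "is_cycle V E c" and z: "z \<in> set c" and s: "s \<in> set c"
  shows "\<exists>xs. walk E xs \<and> xs \<noteq> [] \<and> hd xs = z \<and> last xs = s \<and> pedges xs \<subseteq> cycle_edges c"
proof -
  obtain A B where AB: "c = A @ z # B" using z by (meson split_list)
  have c': "is_cycle V E (z # B @ A)" "cycle_edges (z # B @ A) = cycle_edges c"
    using cycle_swap[of V E A "z # B"] c AB by auto
  have "s \<in> set (z # B @ A)" using s AB by auto
  then obtain X Y where XY: "z # B @ A = X @ s # Y" by (meson split_list)
  have w: "walk E (X @ s # Y)" using cycle_walk[OF c'(1)] XY by simp
  have "pedges (X @ [s]) \<subseteq> pedges (X @ s # Y)" using pedges_prefix[of "X @ [s]" Y] by simp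
  also have "\<dots> \<subseteq> pedges ((z # B @ A) @ [z])" using pedges_prefix XY by metis
  also have "\<dots> = cycle_edges c" using c' by (simp add: cycle_edges_alt)
  finally have pe: "pedges (X @ [s]) \<subseteq> cycle_edges c" .
  have "hd (X @ [s]) = z" using XY by (cases X) auto
  then show ?thesis using pe walk_prefix[of E "X @ [s]" Y] w
    by (intro exI[of _ "X @ [s]"]) simp
qed

lemma lobe_conn_s:
  assumes L: "L \<in> LOB" and e0: "e0 \<in> edges E" "L = cls e0" and st: "e0 = {s, t}"
    and z: "z \<in> lobe_verts L"
  shows "(lobe_adj L)\<^sup>*\<^sup>* z s"
proof -
  obtain w where zw: "{z, w} \<in> L" using z lv_iff L by blast
  then have eq: "edge_equiv V E e0 {z, w}" using e0 unfolding cls_def by blast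
  have e0L: "e0 \<in> L" using e0 cls_self by blast
  show ?thesis
  proof (cases "e0 = {z, w}")
    case True
    then have "z = s \<or> z = t" using st by (auto simp: doubleton_eq_iff)
    then show ?thesis
    proof
      assume "z = t"
      then have "lobe_adj L z s" using e0L st L lobe_adj_iff by (simp add: insert_commute)
      then show ?thesis by blast
    qed simp
  next
    case False
    then obtain c where c: "is_cycle V E c" "e0 \<in> cycle_edges c" "{z, w} \<in> cycle_edges c"
      using eq unfolding edge_equiv_def by blast
    obtain a b where "{z, w} = {a, b}" "a \<in> set c" "b \<in> set c" "E a b" using cycle_edges_set[OF c(1) c(3)] by blast
    then have zc: "z \<in> set c" by (auto simp: doubleton_eq_iff)
    obtain a b where "e0 = {a, b}" "a \<in> set c" "b \<in> set c" using cycle_edges_set[OF c(1) c(2)] by blast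
    then have sc: "s \<in> set c" using st by (auto simp: doubleton_eq_iff)
    obtain xs where xs: "walk E xs" "xs \<noteq> []" "hd xs = z" "last xs = s" "pedges xs \<subseteq> cycle_edges c"
      using cycle_path[OF c(1) zc sc] by blast
    have "pedges xs \<subseteq> L" using xs(5) cycle_cls[OF c(1) c(2)] e0 by blast
    then have "walk (lobe_adj L) xs" using walk_in_lobe L xs by blast
    then show ?thesis using walk_rtranclp xs by metis
  qed
qed

lemma lobe_adj_sym: "lobe_adj L x y \<Longrightarrow> lobe_adj L y x"
  unfolding lobe_adj_def by (auto simp: insert_commute)

lemma lobe_conn:
  assumes L: "L \<in> LOB" and a: "a \<in> lobe_verts L" and b: "b \<in> lobe_verts L"
  shows "(lobe_adj L)\<^sup>*\<^sup>* a b"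
proof -
  obtain e0 where e0: "L = cls e0" "e0 \<in> edges E" using L unfolding lobes_def cls_def by blast
  obtain s t where st: "e0 = {s, t}" using e0 edgesE by blast
  have "(lobe_adj L)\<^sup>*\<^sup>* a s" "(lobe_adj L)\<^sup>*\<^sup>* b s" using lobe_conn_s L e0 st a b by metis+
  then show ?thesis using rtranclp_sym[of "lobe_adj L", OF lobe_adj_sym] by (meson rtranclp_trans)
qed

end

lemma walk_last: "walk R (xs @ [y]) \<Longrightarrow> xs \<noteq> [] \<Longrightarrow> R (last xs) y"
proof (induction xs)
  case (Cons x xs)
  then show ?case by (cases xs) auto
qed simp

context sg
begin

lemma tree_B:
  assumes L: "L \<in> LOB" and w: "walk E (a # I @ [b])" and d: "distinct (a # I @ [b])"
    and a: "a \<in> lobe_verts L" and b: "b \<in> lobe_verts L" and I: "set I \<inter> lobe_verts L = {}"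
    and f: "{a, hd (I @ [b])} \<notin> L"
  shows False
proof -
  have ab: "a \<noteq> b" using d by auto
  obtain Q where Q: "walk (lobe_adj L) Q" "distinct Q" "Q \<noteq> []" "hd Q = b" "last Q = a"
    using rtranclp_path[OF lobe_conn[OF L b a]] by blast
  have QE: "walk E Q" "pedges Q \<subseteq> L" using walk_lobe_adj[OF L Q(1)] by auto
  obtain Q' where Q': "Q = Q' @ [a]" using Q by (metis append_butlast_last_id)
  have "Q' \<noteq> []" using Q Q' ab by auto
  then obtain Q'' where Q'': "Q' = b # Q''" using Q Q' by (cases Q') auto
  have setQ: "set Q \<subseteq> lobe_verts L"
  proof
    fix x assume "x \<in> set Q"
    then have "x \<in> set (b # Q'' @ [a])" using Q' Q'' by simp
    then consider "x = b" | "x \<in> set (Q'' @ [a])" by auto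
    then show "x \<in> lobe_verts L"
    proof cases
      case 1 then show ?thesis using b by simp
    next
      case 2
      then obtain U V' where "Q'' @ [a] = U @ x # V'" using 2 by (meson split_list)
      then have "Q = (b # U) @ [x] @ V'" using Q' Q'' by simp
      then have "{last (b # U), x} \<in> pedges Q" using pedges_join[of "b # U" x V'] by simp
      then have "{last (b # U), x} \<in> L" using QE by blast
      then show ?thesis unfolding lobe_verts_def by blast
    qed
  qed
  let ?c = "Q @ I"
  have "walk E (Q' @ a # (I @ [b]))" using QE w Q' by (subst walk_append) simp
  then have cw: "walk E (Q @ I @ [hd Q])" using Q Q' by simp
  have cd: "distinct ?c" using Q d I setQ by auto
  have cl: "length ?c \<ge> 3"
  proof (cases "I = []")
    case True
    have "Q'' \<noteq> []"
    proof
      assume "Q'' = []"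
      then have "Q = [b, a]" using Q' Q'' by simp
      then have "{b, a} \<in> L" using QE by simp
      then show False using f True by (simp add: insert_commute)
    qed
    then show ?thesis using Q' Q'' by (cases Q'') auto
  qed (use Q' Q'' in \<open>cases I; auto\<close>)
  have cV: "set ?c \<subseteq> V"
  proof -
    have "set I \<subseteq> V"
    proof
      fix x assume "x \<in> set I"
      then obtain U V' where "I = U @ x # V'" by (meson split_list)
      then have "walk E ((a # U) @ x # (V' @ [b]))" using w by simp
      then have "walk E ((a # U) @ [x])" by (rule walk_append[THEN iffD1, THEN conjunct1])
      then have "E (last (a # U)) x" using walk_last[of E "a # U" x] by simp
      then show "x \<in> V" using E_V by blast
    qed
    then show ?thesis using setQ lv_V[OF L] by auto
  qed
  have cyc: "is_cycle V E ?c \<and> cycle_edges ?c = pedges (Q @ I @ [hd Q])"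
    using make_cycle[OF Q(3) cw cd cl cV] .
  have "pedges (Q @ I @ [hd Q]) = pedges (Q' @ [a]) \<union> pedges (a # I @ [b])"
    using pedges_append[of Q' a "I @ [b]"] Q Q' by simp
  then have ce: "pedges Q \<subseteq> cycle_edges ?c" "pedges (a # I @ [b]) \<subseteq> cycle_edges ?c"
    using cyc Q' by auto
  have g: "{b, hd (Q'' @ [a])} \<in> pedges Q" using Q' Q'' by (cases Q'') auto
  have fp: "{a, hd (I @ [b])} \<in> pedges (a # I @ [b])" by (cases I) auto
  have gL: "{b, hd (Q'' @ [a])} \<in> L" using g QE by blast
  have fE: "{a, hd (I @ [b])} \<in> edges E" using pedges_walk_E[OF w fp] .
  have "edge_equiv V E {b, hd (Q'' @ [a])} {a, hd (I @ [b])}"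
    unfolding edge_equiv_def using cyc ce g fp by blast
  moreover have "L = cls {b, hd (Q'' @ [a])}" using lobe_cls[OF L gL] .
  ultimately have "{a, hd (I @ [b])} \<in> L" using fE unfolding cls_def by blast
  then show False using f by simp
qed

lemma RN_E: "RN L x y \<Longrightarrow> E x y"
  unfolding RN_def by simp

lemma tree_B3:
  assumes L: "L \<in> LOB" and r: "(RN L)\<^sup>*\<^sup>* a b" and a: "a \<in> lobe_verts L" and b: "b \<in> lobe_verts L"
  shows "a = b"
proof (rule ccontr)
  assume ab: "a \<noteq> b"
  obtain xs where xs: "walk (RN L) xs" "distinct xs" "xs \<noteq> []" "hd xs = a" "last xs = b"
    using rtranclp_path[OF r] by blast
  obtain xs' where xs': "xs = a # xs'" using xs by (cases xs) auto
  have "xs' \<noteq> []" using xs xs' ab by auto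
  then have "\<exists>z\<in>set xs'. z \<in> lobe_verts L" using xs xs' b by (metis last_ConsR last_in_set)
  then obtain I w rest where sp: "xs' = I @ w # rest" "w \<in> lobe_verts L" "\<forall>z\<in>set I. z \<notin> lobe_verts L"
    using split_list_first_prop[of xs' "\<lambda>z. z \<in> lobe_verts L"] by blast
  have xe: "xs = (a # I @ [w]) @ rest" using xs' sp by simp
  have wr: "walk (RN L) (a # I @ [w])" using xs(1) xe walk_prefix by metis
  have w: "walk E (a # I @ [w])" using walk_mono[OF RN_E wr] .
  have d: "distinct (a # I @ [w])" using xs(2) xe by (metis distinct_append)
  have "RN L a (hd (I @ [w]))" using wr by (cases I) auto
  then have f: "{a, hd (I @ [w])} \<notin> L" unfolding RN_def by simp
  show False using tree_B[OF L w d a sp(2) _ f] sp(3) by blast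
qed

lemma two_lobes:
  assumes L: "L \<in> LOB" and M: "M \<in> LOB" and LM: "L \<noteq> M"
    and a: "a \<in> lobe_verts L" "a \<in> lobe_verts M" and b: "b \<in> lobe_verts L" "b \<in> lobe_verts M"
  shows "a = b"
proof -
  have "(lobe_adj M)\<^sup>*\<^sup>* a b" using lobe_conn[OF M a(2) b(2)] .
  moreover have "\<And>x y. lobe_adj M x y \<Longrightarrow> RN L x y"
    unfolding RN_def using lobe_adjE[OF M] lobes_disj[OF L M] LM by blast
  ultimately have "(RN L)\<^sup>*\<^sup>* a b" by (metis mono_rtranclp)
  then show ?thesis using tree_B3[OF L _ a(1) b(1)] by blast
qed

lemma edge_in:
  assumes M: "M \<in> LOB" and x: "x \<in> lobe_verts M" and y: "y \<in> lobe_verts M" and E: "E x y"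
  shows "{x, y} \<in> M"
proof -
  have e: "{x, y} \<in> edges E" using E edges_iff by blast
  let ?N = "cls {x, y}"
  have N: "?N \<in> LOB" "{x, y} \<in> ?N" using cls_lobe cls_self e by blast+
  have "x \<in> lobe_verts ?N" "y \<in> lobe_verts ?N" using N(2) unfolding lobe_verts_def by blast+
  then have "?N = M" using two_lobes[OF N(1) M] x y E_irr[OF E] by blast
  then show ?thesis using N by simp
qed

end

context sg
begin

definition LS :: "'a \<Rightarrow> 'a set set set" where
  "LS z = {L \<in> LOB. z \<in> lobe_verts L}"

definition DR :: "'a set \<Rightarrow> 'a \<Rightarrow> 'a \<Rightarrow> bool" where
  "DR D x y \<longleftrightarrow> x \<in> D \<and> y \<in> D \<and> E x y"

definition closedD :: "'a set \<Rightarrow> bool" where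
  "closedD D \<longleftrightarrow> D \<subseteq> V \<and> (\<forall>x\<in>D. \<forall>y\<in>D. E x y \<longrightarrow> lobe_verts (cls {x, y}) \<subseteq> D)
     \<and> (\<forall>a\<in>D. \<forall>b\<in>D. (DR D)\<^sup>*\<^sup>* a b) \<and> (\<forall>z\<in>D. \<exists>M\<in>LS z. lobe_verts M \<subseteq> D)"

definition Dp :: "'a set \<Rightarrow> 'a \<Rightarrow> 'a set" where
  "Dp D z = D \<union> \<Union>{lobe_verts M | M. M \<in> LS z}"

definition inl :: "'a set \<Rightarrow> 'a \<Rightarrow> 'a set set set" where
  "inl D z = {M \<in> LS z. lobe_verts M \<subseteq> D}"

lemma RN_sym: "RN K x y \<Longrightarrow> RN K y x"
  unfolding RN_def using E_sym by (auto simp: insert_commute)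

lemma RN_sym_rt: "(RN K)\<^sup>*\<^sup>* x y \<Longrightarrow> (RN K)\<^sup>*\<^sup>* y x"
  using rtranclp_sym[of "RN K", OF RN_sym] by blast

lemma RN_from_DR:
  assumes "closedD D" "K \<in> LOB" "\<not> lobe_verts K \<subseteq> D" "DR D x y"
  shows "RN K x y"
proof -
  have xy: "x \<in> D" "y \<in> D" "E x y" using assms(4) unfolding DR_def by auto
  have "{x, y} \<notin> K"
  proof
    assume "{x, y} \<in> K"
    then have "K = cls {x, y}" using lobe_cls assms(2) by blast
    then show False using assms(1,3) xy unfolding closedD_def by blast
  qed
  then show ?thesis using xy unfolding RN_def by simp
qed

lemma RN_from_lobe:
  assumes "M \<in> LOB" "K \<in> LOB" "M \<noteq> K" "lobe_adj M x y"
  shows "RN K x y"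
  using assms lobe_adjE lobes_disj unfolding RN_def by blast

lemma RN_rt_DR: "closedD D \<Longrightarrow> K \<in> LOB \<Longrightarrow> \<not> lobe_verts K \<subseteq> D \<Longrightarrow> (DR D)\<^sup>*\<^sup>* a b \<Longrightarrow> (RN K)\<^sup>*\<^sup>* a b"
  using RN_from_DR by (metis mono_rtranclp)

lemma RN_rt_lobe: "M \<in> LOB \<Longrightarrow> K \<in> LOB \<Longrightarrow> M \<noteq> K \<Longrightarrow> (lobe_adj M)\<^sup>*\<^sup>* a b \<Longrightarrow> (RN K)\<^sup>*\<^sup>* a b"
  using RN_from_lobe by (metis mono_rtranclp)

lemma KL:
  assumes D: "closedD D" and z: "z \<in> D" and M: "M \<in> LS z" and nM: "\<not> lobe_verts M \<subseteq> D"
  shows "lobe_verts M \<inter> D = {z}"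
proof -
  have HM: "M \<in> LOB" "z \<in> lobe_verts M" using M unfolding LS_def by auto
  have "a = z" if a: "a \<in> lobe_verts M" "a \<in> D" for a
  proof -
    have "(DR D)\<^sup>*\<^sup>* z a" using D z a unfolding closedD_def by blast
    then have "(RN M)\<^sup>*\<^sup>* z a" using RN_rt_DR[OF D HM(1) nM] by blast
    then show "a = z" using tree_B3[OF HM(1) _ HM(2) a(1)] by simp
  qed
  then show ?thesis using HM z by blast
qed

lemma KL':
  assumes "closedD D" "z \<in> D" "M \<in> LS z" "a \<in> lobe_verts M" "a \<in> D" "a \<noteq> z"
  shows "lobe_verts M \<subseteq> D"
  using KL assms by blast

lemma RNZ:
  assumes D: "closedD D" and z: "z \<in> D" and K: "K \<in> LOB" and zK: "z \<notin> lobe_verts K"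
    and nK: "\<not> lobe_verts K \<subseteq> D" and a: "a \<in> Dp D z"
  shows "(RN K)\<^sup>*\<^sup>* a z"
proof (cases "a \<in> D")
  case True
  then have "(DR D)\<^sup>*\<^sup>* a z" using D z unfolding closedD_def by blast
  then show ?thesis using RN_rt_DR[OF D K nK] by blast
next
  case False
  then obtain M where M: "M \<in> LS z" "a \<in> lobe_verts M" using a unfolding Dp_def by blast
  have HM: "M \<in> LOB" "z \<in> lobe_verts M" using M unfolding LS_def by auto
  have "M \<noteq> K" using HM zK by blast
  then show ?thesis using RN_rt_lobe[OF HM(1) K] lobe_conn[OF HM(1) M(2) HM(2)] by blast
qed

lemma CARD1:
  assumes D: "closedD D" and z: "z \<in> D" and K: "K \<in> LOB" and zK: "z \<notin> lobe_verts K"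
    and nK: "\<not> lobe_verts K \<subseteq> D" and a: "a \<in> Dp D z" "a \<in> lobe_verts K"
    and b: "b \<in> Dp D z" "b \<in> lobe_verts K"
  shows "a = b"
proof -
  have "(RN K)\<^sup>*\<^sup>* a z" "(RN K)\<^sup>*\<^sup>* b z" using RNZ[OF D z K zK nK] a b by blast+
  then have "(RN K)\<^sup>*\<^sup>* a b" using RN_sym_rt by (meson rtranclp_trans)
  then show ?thesis using tree_B3[OF K _ a(2) b(2)] by simp
qed

lemma cls_lv: "E x y \<Longrightarrow> cls {x, y} \<in> LOB \<and> x \<in> lobe_verts (cls {x, y}) \<and> y \<in> lobe_verts (cls {x, y})"
  using cls_lobe cls_self edges_iff unfolding lobe_verts_def by blast

lemma LS_I: "M \<in> LOB \<Longrightarrow> z \<in> lobe_verts M \<Longrightarrow> M \<in> LS z"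
  unfolding LS_def by simp

lemma LS_D: "M \<in> LS z \<Longrightarrow> M \<in> LOB \<and> z \<in> lobe_verts M"
  unfolding LS_def by simp

lemma closed_ext:
  assumes D: "closedD D" and z: "z \<in> D"
  shows "closedD (Dp D z)"
proof -
  have sub: "D \<subseteq> Dp D z" unfolding Dp_def by blast
  have V: "Dp D z \<subseteq> V" using D lv_V unfolding Dp_def closedD_def LS_def by blast
  have e: "lobe_verts (cls {x, y}) \<subseteq> Dp D z" if xy: "x \<in> Dp D z" "y \<in> Dp D z" "E x y" for x y
  proof -
    let ?N = "cls {x, y}"
    have N: "?N \<in> LOB" "x \<in> lobe_verts ?N" "y \<in> lobe_verts ?N" using cls_lv xy(3) by blast+
    show ?thesis
    proof (cases "z \<in> lobe_verts ?N")
      case True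
      then show ?thesis using N unfolding Dp_def LS_def by blast
    next
      case False
      show ?thesis
      proof (cases "lobe_verts ?N \<subseteq> D")
        case False': False
        have "x = y" using CARD1[OF D z N(1) False False'] xy N by blast
        then show ?thesis using E_irr xy by blast
      qed (use sub in blast)
    qed
  qed
  have toz: "(DR (Dp D z))\<^sup>*\<^sup>* a z" if a: "a \<in> Dp D z" for a
  proof (cases "a \<in> D")
    case True
    then have "(DR D)\<^sup>*\<^sup>* a z" using D z unfolding closedD_def by blast
    moreover have "\<And>x y. DR D x y \<Longrightarrow> DR (Dp D z) x y" using sub unfolding DR_def by blast
    ultimately show ?thesis by (metis mono_rtranclp)
  next
    case False
    then obtain M where M: "M \<in> LS z" "a \<in> lobe_verts M" using a unfolding Dp_def by blast
    have HM: "M \<in> LOB" "z \<in> lobe_verts M" using M unfolding LS_def by auto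
    have "(lobe_adj M)\<^sup>*\<^sup>* a z" using lobe_conn[OF HM(1) M(2) HM(2)] .
    moreover have "\<And>x y. lobe_adj M x y \<Longrightarrow> DR (Dp D z) x y"
    proof -
      fix x y assume "lobe_adj M x y"
      then have "E x y" "{x, y} \<in> M" using lobe_adjE HM by blast+
      then have "x \<in> lobe_verts M" "y \<in> lobe_verts M" unfolding lobe_verts_def by blast+
      then show "DR (Dp D z) x y" using \<open>E x y\<close> M unfolding DR_def Dp_def by blast
    qed
    ultimately show ?thesis by (metis mono_rtranclp)
  qed
  have DRsym: "\<And>x y. DR (Dp D z) x y \<Longrightarrow> DR (Dp D z) y x" unfolding DR_def using E_sym by blast
  have conn: "(DR (Dp D z))\<^sup>*\<^sup>* a b" if "a \<in> Dp D z" "b \<in> Dp D z" for a b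
    using toz[OF that(1)] rtranclp_sym[OF DRsym toz[OF that(2)]] by (meson rtranclp_trans)
  have lob: "\<exists>M\<in>LS a. lobe_verts M \<subseteq> Dp D z" if a: "a \<in> Dp D z" for a
  proof (cases "a \<in> D")
    case True
    then show ?thesis using D sub unfolding closedD_def by blast
  next
    case False
    then obtain M where M: "M \<in> LS z" "a \<in> lobe_verts M" using a unfolding Dp_def by blast
    then have "M \<in> LS a" "lobe_verts M \<subseteq> Dp D z" unfolding LS_def Dp_def by auto
    then show ?thesis by blast
  qed
  show ?thesis unfolding closedD_def using V e conn lob by blast
qed

lemma MIX:
  assumes D: "closedD D" and z: "z \<in> D" and M: "M \<in> LS z" and nM: "\<not> lobe_verts M \<subseteq> D"
    and a: "a \<in> D" and b: "b \<in> lobe_verts M" "b \<noteq> z" and E: "E a b"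
  shows "a = z"
proof -
  let ?N = "cls {a, b}"
  have N: "?N \<in> LOB" "a \<in> lobe_verts ?N" "b \<in> lobe_verts ?N" using cls_lv E by blast+
  have HM: "M \<in> LOB" "z \<in> lobe_verts M" using M unfolding LS_def by auto
  have MD: "lobe_verts M \<inter> D = {z}" using KL[OF D z M nM] .
  have bD: "b \<notin> D" using MD b by blast
  show ?thesis
  proof (cases "?N = M")
    case True
    then show ?thesis using MD N a by blast
  next
    case NM: False
    have zN: "z \<notin> lobe_verts ?N" using two_lobes[OF N(1) HM(1) NM] N HM b by blast
    have nN: "\<not> lobe_verts ?N \<subseteq> D" using N bD by blast
    have "a \<in> Dp D z" "b \<in> Dp D z" using a b M unfolding Dp_def by blast+
    then have "a = b" using CARD1[OF D z N(1) zN nN] N by blast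
    then show ?thesis using a bD by blast
  qed
qed

lemma SEP2:
  assumes D: "closedD D" and z: "z \<in> D" and M1: "M1 \<in> LS z" "\<not> lobe_verts M1 \<subseteq> D"
    and M2: "M2 \<in> LS z" "\<not> lobe_verts M2 \<subseteq> D" and M12: "M1 \<noteq> M2"
    and a: "a \<in> lobe_verts M1" "a \<noteq> z" and b: "b \<in> lobe_verts M2" "b \<noteq> z"
  shows "\<not> E a b"
proof
  assume E: "E a b"
  let ?N = "cls {a, b}"
  have N: "?N \<in> LOB" "a \<in> lobe_verts ?N" "b \<in> lobe_verts ?N" using cls_lv E by blast+
  have HM: "M1 \<in> LOB" "z \<in> lobe_verts M1" "M2 \<in> LOB" "z \<in> lobe_verts M2" using M1 M2 unfolding LS_def by auto
  have aD: "a \<notin> D" using KL[OF D z M1] a by blast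
  have N1: "?N \<noteq> M1"
  proof
    assume "?N = M1"
    then show False using two_lobes[OF HM(1) HM(3) M12] N HM b by blast
  qed
  have zN: "z \<notin> lobe_verts ?N" using two_lobes[OF N(1) HM(1) N1] N HM a by blast
  have nN: "\<not> lobe_verts ?N \<subseteq> D" using N aD by blast
  have "a \<in> Dp D z" "b \<in> Dp D z" using a b M1 M2 unfolding Dp_def by blast+
  then have "a = b" using CARD1[OF D z N(1) zN nN] N by blast
  then show False using two_lobes[OF HM(1) HM(3) M12] a b HM by blast
qed

lemma NL1:
  assumes D: "closedD D" and z: "z \<in> D" and w: "w \<in> D" "w \<noteq> z" and K: "K \<in> LS w"
    and KD: "lobe_verts K \<subseteq> Dp D z"
  shows "lobe_verts K \<subseteq> D"
proof (rule ccontr)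
  assume nK: "\<not> lobe_verts K \<subseteq> D"
  have KL0: "K \<in> LOB" "w \<in> lobe_verts K" using K unfolding LS_def by auto
  show False
  proof (cases "z \<in> lobe_verts K")
    case True
    then show False using KL[OF D z LS_I[OF KL0(1) True] nK] w KL0 by blast
  next
    case False
    obtain w2 where w2: "w2 \<in> lobe_verts K" "w2 \<noteq> w" using lv_other[OF KL0] by blast
    have "w = w2" using CARD1[OF D z KL0(1) False nK] KD w2 KL0 by blast
    then show False using w2 by simp
  qed
qed

lemma NL2:
  assumes D: "closedD D" and z: "z \<in> D" and M: "M \<in> LS z" and w: "w \<in> lobe_verts M" "w \<notin> D"
    and K: "K \<in> LS w" and KD: "lobe_verts K \<subseteq> Dp D z"
  shows "K = M"
proof (rule ccontr)
  assume KM: "K \<noteq> M"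
  have KL0: "K \<in> LOB" "w \<in> lobe_verts K" using K unfolding LS_def by auto
  have HM: "M \<in> LOB" "z \<in> lobe_verts M" using M unfolding LS_def by auto
  have wz: "w \<noteq> z" using w z by blast
  have zK: "z \<notin> lobe_verts K" using two_lobes[OF KL0(1) HM(1) KM] KL0 HM w wz by blast
  have nK: "\<not> lobe_verts K \<subseteq> D" using KL0 w by blast
  obtain w2 where w2: "w2 \<in> lobe_verts K" "w2 \<noteq> w" using lv_other[OF KL0] by blast
  have "w = w2" using CARD1[OF D z KL0(1) zK nK] KD w2 KL0 by blast
  then show False using w2 by simp
qed

lemma closed_lobe:
  assumes L: "L \<in> LOB"
  shows "closedD (lobe_verts L)"
proof -
  have "x \<in> lobe_verts L \<Longrightarrow> y \<in> lobe_verts L \<Longrightarrow> E x y \<Longrightarrow> lobe_verts (cls {x, y}) \<subseteq> lobe_verts L" for x y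
  proof -
    assume "x \<in> lobe_verts L" "y \<in> lobe_verts L" "E x y"
    then have "{x, y} \<in> L" using edge_in[OF L] by blast
    then have "L = cls {x, y}" using lobe_cls[OF L] by blast
    then show ?thesis by simp
  qed
  moreover have "(DR (lobe_verts L))\<^sup>*\<^sup>* a b" if "a \<in> lobe_verts L" "b \<in> lobe_verts L" for a b
  proof -
    have "\<And>x y. lobe_adj L x y \<Longrightarrow> DR (lobe_verts L) x y"
      unfolding DR_def lobe_verts_def using lobe_adjE[OF L] by blast
    then show ?thesis using lobe_conn[OF L that] by (metis mono_rtranclp)
  qed
  moreover have "\<forall>z\<in>lobe_verts L. \<exists>M\<in>LS z. lobe_verts M \<subseteq> lobe_verts L"
    using L unfolding LS_def by blast
  ultimately show ?thesis unfolding closedD_def using lv_V[OF L] by blast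
qed

lemma lobe_inl:
  assumes L: "L \<in> LOB" and a: "a \<in> lobe_verts L"
  shows "inl (lobe_verts L) a = {L}"
proof -
  have "K = L" if K: "K \<in> LS a" "lobe_verts K \<subseteq> lobe_verts L" for K
  proof (rule ccontr)
    assume KL0: "K \<noteq> L"
    have K': "K \<in> LOB" "a \<in> lobe_verts K" using K unfolding LS_def by auto
    obtain w where "w \<in> lobe_verts K" "w \<noteq> a" using lv_other[OF K'] by blast
    then show False using two_lobes[OF K'(1) L KL0] K' K a by blast
  qed
  then show ?thesis using L a unfolding inl_def LS_def by blast
qed

lemma closedD_V: "closedD D \<Longrightarrow> D \<subseteq> V"
  and closedD_e: "closedD D \<Longrightarrow> x \<in> D \<Longrightarrow> y \<in> D \<Longrightarrow> E x y \<Longrightarrow> lobe_verts (cls {x, y}) \<subseteq> D"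
  and closedD_conn: "closedD D \<Longrightarrow> a \<in> D \<Longrightarrow> b \<in> D \<Longrightarrow> (DR D)\<^sup>*\<^sup>* a b"
  and closedD_lob: "closedD D \<Longrightarrow> z \<in> D \<Longrightarrow> \<exists>M\<in>LS z. lobe_verts M \<subseteq> D"
  unfolding closedD_def by blast+

lemma closedD_I:
  assumes "D \<subseteq> V" "\<And>x y. x \<in> D \<Longrightarrow> y \<in> D \<Longrightarrow> E x y \<Longrightarrow> lobe_verts (cls {x, y}) \<subseteq> D"
    "\<And>a b. a \<in> D \<Longrightarrow> b \<in> D \<Longrightarrow> (DR D)\<^sup>*\<^sup>* a b" "\<And>z. z \<in> D \<Longrightarrow> \<exists>M\<in>LS z. lobe_verts M \<subseteq> D"
  shows "closedD D"
  unfolding closedD_def using assms by blast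

lemma closedD_Union:
  assumes C: "C \<noteq> {}" "\<forall>A\<in>C. \<forall>B\<in>C. A \<subseteq> B \<or> B \<subseteq> A" "\<forall>D\<in>C. closedD D"
  shows "closedD (\<Union>C)"
proof -
  have two: "\<exists>D\<in>C. a \<in> D \<and> b \<in> D" if ab: "a \<in> \<Union>C" "b \<in> \<Union>C" for a b
  proof -
    obtain A B where AB: "A \<in> C" "a \<in> A" "B \<in> C" "b \<in> B" using ab by blast
    then have "A \<subseteq> B \<or> B \<subseteq> A" using C(2) by blast
    then show ?thesis using AB by blast
  qed
  show ?thesis
  proof (rule closedD_I)
    show "\<Union>C \<subseteq> V" using C(3) closedD_V by blast
  next
    fix x y assume xy: "x \<in> \<Union>C" "y \<in> \<Union>C" "E x y"
    obtain D where D: "D \<in> C" "x \<in> D" "y \<in> D" using two[OF xy(1) xy(2)] by blast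
    have "lobe_verts (cls {x, y}) \<subseteq> D" using closedD_e[of D x y] C(3) D xy(3) by blast
    then show "lobe_verts (cls {x, y}) \<subseteq> \<Union>C" using D by blast
  next
    fix a b assume ab: "a \<in> \<Union>C" "b \<in> \<Union>C"
    obtain D where D: "D \<in> C" "a \<in> D" "b \<in> D" using two[OF ab] by blast
    have "(DR D)\<^sup>*\<^sup>* a b" using closedD_conn[of D a b] C(3) D by blast
    moreover have "\<And>x y. DR D x y \<Longrightarrow> DR (\<Union>C) x y" using D unfolding DR_def by blast
    ultimately show "(DR (\<Union>C))\<^sup>*\<^sup>* a b" by (metis mono_rtranclp)
  next
    fix z assume "z \<in> \<Union>C"
    then obtain D where D: "D \<in> C" "z \<in> D" by blast
    then obtain M where "M \<in> LS z" "lobe_verts M \<subseteq> D" using closedD_lob[of D z] C(3) by blast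
    then show "\<exists>M\<in>LS z. lobe_verts M \<subseteq> \<Union>C" using D by blast
  qed
qed

end

lemma eqpoll_remove:
  assumes "A \<approx> B" "a \<in> A" "b \<in> B"
  shows "A - {a} \<approx> B - {b}"
proof -
  obtain f where f: "bij_betw f A B" using assms(1) unfolding eqpoll_def by blast
  have inj: "inj_on f A" and img: "f ` A = B" using f by (auto simp: bij_betw_def)
  obtain y where y: "y \<in> A" "f y = b" using img assms(3) by blast
  define g where "g x = (if f x = b then f a else f x)" for x
  have "bij_betw g (A - {a}) (B - {b})"
    unfolding bij_betw_def
  proof
    show "inj_on g (A - {a})"
    proof (rule inj_onI)
      fix x1 x2 assume x: "x1 \<in> A - {a}" "x2 \<in> A - {a}" "g x1 = g x2"
      show "x1 = x2"
        using x inj assms(2) unfolding g_def inj_on_def by (auto split: if_splits)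
    qed
    show "g ` (A - {a}) = B - {b}"
    proof
      show "g ` (A - {a}) \<subseteq> B - {b}"
        using inj img assms(2) unfolding g_def inj_on_def by (auto split: if_splits)
    next
      show "B - {b} \<subseteq> g ` (A - {a})"
      proof
        fix c assume c: "c \<in> B - {b}"
        then obtain x where x: "x \<in> A" "f x = c" using img by blast
        show "c \<in> g ` (A - {a})"
        proof (cases "x = a")
          case True
          then have "y \<noteq> a" using y x c by auto
          then have "g y = c" using y x True unfolding g_def by simp
          then show ?thesis using y \<open>y \<noteq> a\<close> by blast
        next
          case False
          then have "g x = c" using x c unfolding g_def by simp
          then show ?thesis using x False by blast
        qed
      qed
    qed
  qed
  then show ?thesis unfolding eqpoll_def by blast
qed

locale hyp = sg +
  assumes conn: "connected_graph V E"
    and lat: "\<forall>L\<in>lobes V E. arc_transitive (lobe_verts L) (lobe_adj L)"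
    and liso: "\<forall>L1\<in>lobes V E. \<forall>L2\<in>lobes V E.
          graph_iso (lobe_verts L1) (lobe_adj L1) (lobe_verts L2) (lobe_adj L2)"
    and leq: "\<forall>u\<in>V. \<forall>v\<in>V. {L \<in> lobes V E. u \<in> lobe_verts L} \<approx> {L \<in> lobes V E. v \<in> lobe_verts L}"
begin

definition liso_at where
  "liso_at M M' h \<longleftrightarrow> bij_betw h (lobe_verts M) (lobe_verts M') \<and>
     (\<forall>a\<in>lobe_verts M. \<forall>b\<in>lobe_verts M. lobe_adj M a b \<longleftrightarrow> lobe_adj M' (h a) (h b))"

lemma arc_iso:
  assumes L1: "L1 \<in> LOB" and L2: "L2 \<in> LOB" and uv: "{u, v} \<in> L1" and xy: "{x, y} \<in> L2"
  shows "\<exists>h. liso_at L1 L2 h \<and> h u = x \<and> h v = y"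
proof -
  obtain g where g: "bij_betw g (lobe_verts L1) (lobe_verts L2)"
    "\<forall>a\<in>lobe_verts L1. \<forall>b\<in>lobe_verts L1. lobe_adj L1 a b \<longleftrightarrow> lobe_adj L2 (g a) (g b)"
    using liso L1 L2 unfolding graph_iso_def by blast
  have uvL: "u \<in> lobe_verts L1" "v \<in> lobe_verts L1" using uv unfolding lobe_verts_def by blast+
  have xyL: "x \<in> lobe_verts L2" "y \<in> lobe_verts L2" using xy unfolding lobe_verts_def by blast+
  have a1: "lobe_adj L1 u v" using uv lobe_adj_iff L1 by blast
  then have a2: "lobe_adj L2 (g u) (g v)" using g uvL by blast
  have gin: "g u \<in> lobe_verts L2" "g v \<in> lobe_verts L2" using g uvL by (auto simp: bij_betw_def)
  have a3: "lobe_adj L2 x y" using xy lobe_adj_iff L2 by blast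
  obtain s where s: "is_automorphism (lobe_verts L2) (lobe_adj L2) s" "s (g u) = x" "s (g v) = y"
    using lat L2 gin xyL a2 a3 unfolding arc_transitive_def by blast
  have sb: "bij_betw s (lobe_verts L2) (lobe_verts L2)"
    and sa: "\<forall>a\<in>lobe_verts L2. \<forall>b\<in>lobe_verts L2. lobe_adj L2 a b \<longleftrightarrow> lobe_adj L2 (s a) (s b)"
    using s(1) unfolding is_automorphism_def by auto
  have "bij_betw (s \<circ> g) (lobe_verts L1) (lobe_verts L2)" using bij_betw_trans[OF g(1) sb] .
  moreover have "\<forall>a\<in>lobe_verts L1. \<forall>b\<in>lobe_verts L1. lobe_adj L1 a b \<longleftrightarrow> lobe_adj L2 ((s \<circ> g) a) ((s \<circ> g) b)"
  proof (intro ballI)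
    fix a b assume ab: "a \<in> lobe_verts L1" "b \<in> lobe_verts L1"
    then have "g a \<in> lobe_verts L2" "g b \<in> lobe_verts L2" using g(1) by (auto simp: bij_betw_def)
    then show "lobe_adj L1 a b \<longleftrightarrow> lobe_adj L2 ((s \<circ> g) a) ((s \<circ> g) b)" using g(2) sa ab by simp
  qed
  ultimately show ?thesis unfolding liso_at_def using s by (intro exI[of _ "s \<circ> g"]) simp
qed

lemma root_iso:
  assumes M: "M \<in> LOB" and M': "M' \<in> LOB" and z: "z \<in> lobe_verts M" and z': "z' \<in> lobe_verts M'"
  shows "\<exists>h. liso_at M M' h \<and> h z = z'"
proof -
  obtain w where "{z, w} \<in> M" using lv_other[OF M z] by blast
  moreover obtain w' where "{z', w'} \<in> M'" using lv_other[OF M' z'] by blast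
  ultimately show ?thesis using arc_iso[OF M M'] by blast
qed

lemma LS_eqpoll: "u \<in> V \<Longrightarrow> v \<in> V \<Longrightarrow> LS u \<approx> LS v"
  using leq unfolding LS_def by blast

definition svl :: "('a \<times> 'a) set \<Rightarrow> bool" where
  "svl F \<longleftrightarrow> (\<forall>a b c. (a, b) \<in> F \<longrightarrow> (a, c) \<in> F \<longrightarrow> b = c)"
definition injl :: "('a \<times> 'a) set \<Rightarrow> bool" where
  "injl F \<longleftrightarrow> (\<forall>a b c. (a, c) \<in> F \<longrightarrow> (b, c) \<in> F \<longrightarrow> a = b)"
definition adjl :: "('a \<times> 'a) set \<Rightarrow> bool" where
  "adjl F \<longleftrightarrow> (\<forall>a a' b b'. (a, a') \<in> F \<longrightarrow> (b, b') \<in> F \<longrightarrow> (E a b \<longleftrightarrow> E a' b'))"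
definition compl :: "('a \<times> 'a) set \<Rightarrow> 'a \<Rightarrow> 'a \<Rightarrow> bool" where
  "compl F z z' \<longleftrightarrow> inl (Domain F) z = LS z \<and> inl (Range F) z' = LS z'"
definition sing :: "('a \<times> 'a) set \<Rightarrow> 'a \<Rightarrow> 'a \<Rightarrow> bool" where
  "sing F z z' \<longleftrightarrow> (\<exists>M M'. inl (Domain F) z = {M} \<and> inl (Range F) z' = {M'})"
definition dcl :: "('a \<times> 'a) set \<Rightarrow> bool" where
  "dcl F \<longleftrightarrow> (\<forall>z z'. (z, z') \<in> F \<longrightarrow> compl F z z' \<or> sing F z z')"

definition good :: "('a \<times> 'a) set \<Rightarrow> bool" where
  "good F \<longleftrightarrow> F \<subseteq> V \<times> V \<and> svl F \<and> injl F \<and> adjl F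
    \<and> closedD (Domain F) \<and> closedD (Range F) \<and> dcl F"

lemma goodD:
  assumes "good F"
  shows "F \<subseteq> V \<times> V" "\<And>a b c. (a, b) \<in> F \<Longrightarrow> (a, c) \<in> F \<Longrightarrow> b = c"
    "\<And>a b c. (a, c) \<in> F \<Longrightarrow> (b, c) \<in> F \<Longrightarrow> a = b"
    "\<And>a a' b b'. (a, a') \<in> F \<Longrightarrow> (b, b') \<in> F \<Longrightarrow> (E a b \<longleftrightarrow> E a' b')"
    "closedD (Domain F)" "closedD (Range F)"
    "\<And>z z'. (z, z') \<in> F \<Longrightarrow> compl F z z' \<or> sing F z z'"
proof -
  have g: "F \<subseteq> V \<times> V" "svl F" "injl F" "adjl F" "closedD (Domain F)" "closedD (Range F)" "dcl F"
    using assms unfolding good_def by simp_all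
  show "F \<subseteq> V \<times> V" "closedD (Domain F)" "closedD (Range F)" using g by simp_all
  show "\<And>a b c. (a, b) \<in> F \<Longrightarrow> (a, c) \<in> F \<Longrightarrow> b = c" using g(2) unfolding svl_def by blast
  show "\<And>a b c. (a, c) \<in> F \<Longrightarrow> (b, c) \<in> F \<Longrightarrow> a = b" using g(3) unfolding injl_def by blast
  show "\<And>a a' b b'. (a, a') \<in> F \<Longrightarrow> (b, b') \<in> F \<Longrightarrow> (E a b \<longleftrightarrow> E a' b')"
    using g(4) unfolding adjl_def by blast
  show "\<And>z z'. (z, z') \<in> F \<Longrightarrow> compl F z z' \<or> sing F z z'" using g(7) unfolding dcl_def by blast
qed

lemma goodI:
  assumes "F \<subseteq> V \<times> V" "\<And>a b c. (a, b) \<in> F \<Longrightarrow> (a, c) \<in> F \<Longrightarrow> b = c"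
    "\<And>a b c. (a, c) \<in> F \<Longrightarrow> (b, c) \<in> F \<Longrightarrow> a = b"
    "\<And>a a' b b'. (a, a') \<in> F \<Longrightarrow> (b, b') \<in> F \<Longrightarrow> (E a b \<longleftrightarrow> E a' b')"
    "closedD (Domain F)" "closedD (Range F)"
    "\<And>z z'. (z, z') \<in> F \<Longrightarrow> compl F z z' \<or> sing F z z'"
  shows "good F"
proof -
  have "svl F" unfolding svl_def using assms(2) by blast
  moreover have "injl F" unfolding injl_def using assms(3) by blast
  moreover have "adjl F" unfolding adjl_def using assms(4) by blast
  moreover have "dcl F" unfolding dcl_def using assms(7) by blast
  ultimately show ?thesis unfolding good_def using assms(1,5,6) by simp
qed

lemma good_init:
  assumes L1: "L1 \<in> LOB" and L2: "L2 \<in> LOB" and h: "liso_at L1 L2 h"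
  shows "good {(a, h a) | a. a \<in> lobe_verts L1}"
proof -
  let ?F = "{(a, h a) | a. a \<in> lobe_verts L1}"
  have hb: "bij_betw h (lobe_verts L1) (lobe_verts L2)" and
    hi: "\<And>a b. a \<in> lobe_verts L1 \<Longrightarrow> b \<in> lobe_verts L1 \<Longrightarrow> lobe_adj L1 a b \<longleftrightarrow> lobe_adj L2 (h a) (h b)"
    using h unfolding liso_at_def by auto
  have dom: "Domain ?F = lobe_verts L1" by auto
  have "Range ?F = h ` lobe_verts L1" by blast
  then have ran: "Range ?F = lobe_verts L2" using hb unfolding bij_betw_def by simp
  have hin: "a \<in> lobe_verts L1 \<Longrightarrow> h a \<in> lobe_verts L2" for a using hb unfolding bij_betw_def by auto
  have EL1: "a \<in> lobe_verts L1 \<Longrightarrow> b \<in> lobe_verts L1 \<Longrightarrow> E a b \<longleftrightarrow> lobe_adj L1 a b" for a b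
    using edge_in[OF L1] lobe_adj_iff[OF L1] lobe_adjE[OF L1] by blast
  have EL2: "a \<in> lobe_verts L2 \<Longrightarrow> b \<in> lobe_verts L2 \<Longrightarrow> E a b \<longleftrightarrow> lobe_adj L2 a b" for a b
    using edge_in[OF L2] lobe_adj_iff[OF L2] lobe_adjE[OF L2] by blast
  show ?thesis
  proof (rule goodI)
    show "?F \<subseteq> V \<times> V" using lv_V[OF L1] lv_V[OF L2] hin by blast
  next
    fix a b c assume "(a, b) \<in> ?F" "(a, c) \<in> ?F" then show "b = c" by blast
  next
    fix a b c assume "(a, c) \<in> ?F" "(b, c) \<in> ?F" then show "a = b"
      using hb unfolding bij_betw_def inj_on_def by blast
  next
    fix a a' b b' assume "(a, a') \<in> ?F" "(b, b') \<in> ?F"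
    then have "a \<in> lobe_verts L1" "b \<in> lobe_verts L1" "a' = h a" "b' = h b" by blast+
    then show "E a b \<longleftrightarrow> E a' b'" using EL1 EL2 hi hin by simp
  next
    show "closedD (Domain ?F)" using closed_lobe[OF L1] dom by simp
  next
    show "closedD (Range ?F)" using closed_lobe[OF L2] ran by simp
  next
    fix z z' assume "(z, z') \<in> ?F"
    then have "z \<in> lobe_verts L1" "z' \<in> lobe_verts L2" using hin by blast+
    then have "inl (Domain ?F) z = {L1}" "inl (Range ?F) z' = {L2}"
      using lobe_inl[OF L1] lobe_inl[OF L2] dom ran by simp_all
    then show "compl ?F z z' \<or> sing ?F z z'" unfolding sing_def by blast
  qed
qed

lemma inl_mono: "D1 \<subseteq> D2 \<Longrightarrow> inl D1 z \<subseteq> inl D2 z"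
  unfolding inl_def by blast

lemma inl_LS: "inl D z \<subseteq> LS z"
  unfolding inl_def by blast

lemma chain_two:
  assumes "\<forall>A\<in>C. \<forall>B\<in>C. A \<subseteq> B \<or> B \<subseteq> A" "p \<in> \<Union>C" "q \<in> \<Union>C"
  shows "\<exists>F\<in>C. p \<in> F \<and> q \<in> F"
proof -
  obtain A B where AB: "A \<in> C" "p \<in> A" "B \<in> C" "q \<in> B" using assms(2,3) by blast
  then have "A \<subseteq> B \<or> B \<subseteq> A" using assms(1) by blast
  then show ?thesis using AB by blast
qed

lemma chain_above:
  assumes ch: "\<forall>A\<in>C. \<forall>B\<in>C. A \<subseteq> B \<or> B \<subseteq> A" and Fi: "Fi \<in> C" and Fj: "Fj \<in> C"
  shows "\<exists>F\<in>C. Fi \<subseteq> F \<and> Fj \<subseteq> F"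
proof (cases "Fj \<subseteq> Fi")
  case True then show ?thesis using Fi by blast
next
  case False then have "Fi \<subseteq> Fj" using ch Fi Fj by blast
  then show ?thesis using Fj by blast
qed

lemma chain_lobe:
  assumes ch: "\<forall>A\<in>C. \<forall>B\<in>C. A \<subseteq> B \<or> B \<subseteq> A" and g: "\<forall>F\<in>C. good F"
    and Fi: "Fi \<in> C" and z: "z \<in> Domain Fi" and K: "K \<in> LS z" and KD: "lobe_verts K \<subseteq> Domain (\<Union>C)"
  shows "\<exists>F\<in>C. Fi \<subseteq> F \<and> lobe_verts K \<subseteq> Domain F"
proof -
  have K': "K \<in> LOB" "z \<in> lobe_verts K" using K unfolding LS_def by auto
  obtain a where a: "a \<in> lobe_verts K" "a \<noteq> z" using lv_other[OF K'] by blast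
  then obtain Fj where Fj: "Fj \<in> C" "a \<in> Domain Fj" using KD by blast
  obtain F where F: "F \<in> C" "Fi \<subseteq> F" "Fj \<subseteq> F" using chain_above[OF ch Fi Fj(1)] by blast
  have "z \<in> Domain F" "a \<in> Domain F" using F z Fj by blast+
  moreover have "closedD (Domain F)" using goodD(5) g F(1) by blast
  ultimately show ?thesis using KL'[OF _ _ K a(1) _ a(2)] F by blast
qed

lemma chain_lobe_r:
  assumes ch: "\<forall>A\<in>C. \<forall>B\<in>C. A \<subseteq> B \<or> B \<subseteq> A" and g: "\<forall>F\<in>C. good F"
    and Fi: "Fi \<in> C" and z: "z \<in> Range Fi" and K: "K \<in> LS z" and KD: "lobe_verts K \<subseteq> Range (\<Union>C)"
  shows "\<exists>F\<in>C. Fi \<subseteq> F \<and> lobe_verts K \<subseteq> Range F"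
proof -
  have K': "K \<in> LOB" "z \<in> lobe_verts K" using K unfolding LS_def by auto
  obtain a where a: "a \<in> lobe_verts K" "a \<noteq> z" using lv_other[OF K'] by blast
  then obtain Fj where Fj: "Fj \<in> C" "a \<in> Range Fj" using KD by blast
  obtain F where F: "F \<in> C" "Fi \<subseteq> F" "Fj \<subseteq> F" using chain_above[OF ch Fi Fj(1)] by blast
  have "z \<in> Range F" "a \<in> Range F" using F z Fj by blast+
  moreover have "closedD (Range F)" using goodD(6) g F(1) by blast
  ultimately show ?thesis using KL'[OF _ _ K a(1) _ a(2)] F by blast
qed

lemma good_chain:
  assumes C: "C \<noteq> {}" and ch: "\<forall>A\<in>C. \<forall>B\<in>C. A \<subseteq> B \<or> B \<subseteq> A" and g: "\<forall>F\<in>C. good F"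
  shows "good (\<Union>C)"
proof (rule goodI)
  show "\<Union>C \<subseteq> V \<times> V"
  proof
    fix p assume "p \<in> \<Union>C"
    then obtain F where "F \<in> C" "p \<in> F" by blast
    then show "p \<in> V \<times> V" using goodD(1)[of F] g by blast
  qed
next
  fix a b c assume "(a, b) \<in> \<Union>C" "(a, c) \<in> \<Union>C"
  then obtain F where F: "F \<in> C" "(a, b) \<in> F" "(a, c) \<in> F" using chain_two[OF ch] by blast
  have "good F" using g F(1) by blast
  then show "b = c" using goodD(2) F(2,3) by blast
next
  fix a b c assume "(a, c) \<in> \<Union>C" "(b, c) \<in> \<Union>C"
  then obtain F where F: "F \<in> C" "(a, c) \<in> F" "(b, c) \<in> F" using chain_two[OF ch] by blast
  have "good F" using g F(1) by blast
  then show "a = b" using goodD(3) F(2,3) by blast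
next
  fix a a' b b' assume "(a, a') \<in> \<Union>C" "(b, b') \<in> \<Union>C"
  then obtain F where F: "F \<in> C" "(a, a') \<in> F" "(b, b') \<in> F" using chain_two[OF ch] by blast
  have "good F" using g F(1) by blast
  then show "E a b \<longleftrightarrow> E a' b'" using goodD(4) F(2,3) by blast
next
  have "Domain (\<Union>C) = \<Union>(Domain ` C)" by blast
  moreover have "closedD (\<Union>(Domain ` C))"
  proof (rule closedD_Union)
    show "Domain ` C \<noteq> {}" using C by blast
    show "\<forall>A\<in>Domain ` C. \<forall>B\<in>Domain ` C. A \<subseteq> B \<or> B \<subseteq> A"
    proof (intro ballI)
      fix A B assume "A \<in> Domain ` C" "B \<in> Domain ` C"
      then obtain A' B' where AB: "A' \<in> C" "B' \<in> C" "A = Domain A'" "B = Domain B'" by blast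
      then have "A' \<subseteq> B' \<or> B' \<subseteq> A'" using ch by blast
      then show "A \<subseteq> B \<or> B \<subseteq> A" unfolding AB(3,4) by blast
    qed
    show "\<forall>D\<in>Domain ` C. closedD D" using g goodD(5) by auto
  qed
  ultimately show "closedD (Domain (\<Union>C))" by simp
next
  have "Range (\<Union>C) = \<Union>(Range ` C)" by blast
  moreover have "closedD (\<Union>(Range ` C))"
  proof (rule closedD_Union)
    show "Range ` C \<noteq> {}" using C by blast
    show "\<forall>A\<in>Range ` C. \<forall>B\<in>Range ` C. A \<subseteq> B \<or> B \<subseteq> A"
    proof (intro ballI)
      fix A B assume "A \<in> Range ` C" "B \<in> Range ` C"
      then obtain A' B' where AB: "A' \<in> C" "B' \<in> C" "A = Range A'" "B = Range B'" by blast
      then have "A' \<subseteq> B' \<or> B' \<subseteq> A'" using ch by blast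
      then show "A \<subseteq> B \<or> B \<subseteq> A" unfolding AB(3,4) by blast
    qed
    show "\<forall>D\<in>Range ` C. closedD D" using g goodD(6) by auto
  qed
  ultimately show "closedD (Range (\<Union>C))" by simp
next
  fix z z' assume zz: "(z, z') \<in> \<Union>C"
  then obtain Fi where Fi: "Fi \<in> C" "(z, z') \<in> Fi" by blast
  have DU: "Domain Fi \<subseteq> Domain (\<Union>C)" "Range Fi \<subseteq> Range (\<Union>C)" using Fi by blast+
  have zD: "z \<in> Domain Fi" and zR: "z' \<in> Range Fi" using Fi(2) by blast+
  show "compl (\<Union>C) z z' \<or> sing (\<Union>C) z z'"
  proof (cases "\<exists>F\<in>C. Fi \<subseteq> F \<and> compl F z z'")
    case True
    then obtain F where F: "F \<in> C" "compl F z z'" by blast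
    have "Domain F \<subseteq> Domain (\<Union>C)" "Range F \<subseteq> Range (\<Union>C)" using F by blast+
    then have "inl (Domain F) z \<subseteq> inl (Domain (\<Union>C)) z" "inl (Range F) z' \<subseteq> inl (Range (\<Union>C)) z'"
      using inl_mono by blast+
    then have "compl (\<Union>C) z z'" using F(2) inl_LS[of "Domain (\<Union>C)" z] inl_LS[of "Range (\<Union>C)" z']
      unfolding compl_def by blast
    then show ?thesis by blast
  next
    case False
    have sF: "sing F z z'" if "F \<in> C" "Fi \<subseteq> F" for F
    proof -
      have "good F" using g that(1) by blast
      moreover have "(z, z') \<in> F" using that(2) Fi(2) by blast
      ultimately have "compl F z z' \<or> sing F z z'" by (rule goodD(7))
      then show ?thesis using False that by blast
    qed
    obtain M M' where MM: "inl (Domain Fi) z = {M}" "inl (Range Fi) z' = {M'}"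
      using sF[OF Fi(1)] unfolding sing_def by blast
    have "inl (Domain (\<Union>C)) z = {M}"
    proof
      show "{M} \<subseteq> inl (Domain (\<Union>C)) z" using MM(1) inl_mono[OF DU(1), of z] by simp
    next
      show "inl (Domain (\<Union>C)) z \<subseteq> {M}"
      proof
        fix K assume K: "K \<in> inl (Domain (\<Union>C)) z"
        then have K': "K \<in> LS z" "lobe_verts K \<subseteq> Domain (\<Union>C)" unfolding inl_def by auto
        obtain F where F: "F \<in> C" "Fi \<subseteq> F" "lobe_verts K \<subseteq> Domain F"
          using chain_lobe[OF ch g Fi(1) zD K'] by blast
        obtain N N' where NN: "inl (Domain F) z = {N}" "inl (Range F) z' = {N'}"
          using sF[OF F(1,2)] unfolding sing_def by blast
        have dsub: "Domain Fi \<subseteq> Domain F" using F(2) by (rule Domain_mono)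
        have "K \<in> inl (Domain F) z" using K' F unfolding inl_def by blast
        moreover have "M \<in> inl (Domain F) z" using MM inl_mono[OF dsub, of z] by blast
        ultimately show "K \<in> {M}" using NN(1) by simp
      qed
    qed
    moreover have "inl (Range (\<Union>C)) z' = {M'}"
    proof
      show "{M'} \<subseteq> inl (Range (\<Union>C)) z'" using MM(2) inl_mono[OF DU(2), of z'] by simp
    next
      show "inl (Range (\<Union>C)) z' \<subseteq> {M'}"
      proof
        fix K assume K: "K \<in> inl (Range (\<Union>C)) z'"
        then have K': "K \<in> LS z'" "lobe_verts K \<subseteq> Range (\<Union>C)" unfolding inl_def by auto
        obtain F where F: "F \<in> C" "Fi \<subseteq> F" "lobe_verts K \<subseteq> Range F"
          using chain_lobe_r[OF ch g Fi(1) zR K'] by blast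
        obtain N N' where NN: "inl (Domain F) z = {N}" "inl (Range F) z' = {N'}"
          using sF[OF F(1,2)] unfolding sing_def by blast
        have dsub: "Range Fi \<subseteq> Range F" using F(2) by (rule Range_mono)
        have "K \<in> inl (Range F) z'" using K' F unfolding inl_def by blast
        moreover have "M' \<in> inl (Range F) z'" using MM inl_mono[OF dsub, of z'] by blast
        ultimately show "K \<in> {M'}" using NN(2) by simp
      qed
    qed
    ultimately show ?thesis unfolding sing_def by blast
  qed
qed

end

context hyp
begin

lemma extend:
  assumes g: "good F" and zz: "(z, z') \<in> F" and nc: "\<not> compl F z z'"
  shows "\<exists>F'. good F' \<and> F \<subseteq> F' \<and> F' \<noteq> F"
proof -
  define D where "D = Domain F"
  define D' where "D' = Range F"
  have hD: "closedD D" and hD': "closedD D'" using goodD(5,6)[OF g] D_def D'_def by simp_all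
  have zD: "z \<in> D" and zD': "z' \<in> D'" using zz D_def D'_def by blast+
  have zV: "z \<in> V" "z' \<in> V" using goodD(1)[OF g] zz by blast+
  have sv: "\<And>a b c. (a, b) \<in> F \<Longrightarrow> (a, c) \<in> F \<Longrightarrow> b = c" using goodD(2)[OF g] by blast
  have ij: "\<And>a b c. (a, c) \<in> F \<Longrightarrow> (b, c) \<in> F \<Longrightarrow> a = b" using goodD(3)[OF g] by blast
  have "sing F z z'" using goodD(7)[OF g zz] nc by blast
  then obtain M0 M0' where M0: "inl D z = {M0}" "inl D' z' = {M0'}" unfolding sing_def D_def D'_def by blast
  have "M0 \<in> inl D z" "M0' \<in> inl D' z'" using M0 by simp_all
  then have M0LS: "M0 \<in> LS z" "M0' \<in> LS z'" and M0D: "lobe_verts M0 \<subseteq> D" "lobe_verts M0' \<subseteq> D'"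
    unfolding inl_def by auto
  define MM where "MM = LS z - {M0}"
  define MM' where "MM' = LS z' - {M0'}"
  have MMeq: "MM \<approx> MM'" unfolding MM_def MM'_def using eqpoll_remove[OF LS_eqpoll[OF zV] M0LS] .
  then obtain \<beta> where \<beta>: "bij_betw \<beta> MM MM'" unfolding eqpoll_def by blast
  have \<beta>in: "M \<in> MM \<Longrightarrow> \<beta> M \<in> MM'" for M using \<beta> unfolding bij_betw_def by blast
  have \<beta>inj: "M1 \<in> MM \<Longrightarrow> M2 \<in> MM \<Longrightarrow> \<beta> M1 = \<beta> M2 \<Longrightarrow> M1 = M2" for M1 M2
    using \<beta> unfolding bij_betw_def inj_on_def by blast
  have \<beta>surj: "M' \<in> MM' \<Longrightarrow> \<exists>M\<in>MM. M' = \<beta> M" for M' using \<beta> unfolding bij_betw_def by blast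
  have MMne: "MM \<noteq> {}"
  proof
    assume e: "MM = {}"
    have "MM' \<approx> MM" using eqpoll_sym[OF MMeq] .
    then have "MM' \<approx> {}" using e by simp
    then have e': "MM' = {}" by simp
    have "LS z = {M0}" using e M0LS unfolding MM_def by blast
    moreover have "LS z' = {M0'}" using e' M0LS unfolding MM'_def by blast
    ultimately have "compl F z z'" using M0 unfolding compl_def D_def D'_def by simp
    then show False using nc by simp
  qed
  have Mprop: "M \<in> LS z \<and> \<not> lobe_verts M \<subseteq> D" if M: "M \<in> MM" for M
  proof -
    have "M \<in> LS z" "M \<noteq> M0" using M unfolding MM_def by auto
    moreover have "M \<notin> inl D z" using M0(1) \<open>M \<noteq> M0\<close> by simp
    ultimately show ?thesis unfolding inl_def by blast
  qed
  have Mprop': "\<beta> M \<in> LS z' \<and> \<not> lobe_verts (\<beta> M) \<subseteq> D'" if M: "M \<in> MM" for M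
  proof -
    have "\<beta> M \<in> LS z'" "\<beta> M \<noteq> M0'" using \<beta>in[OF M] unfolding MM'_def by auto
    moreover have "\<beta> M \<notin> inl D' z'" using M0(2) \<open>\<beta> M \<noteq> M0'\<close> by simp
    ultimately show ?thesis unfolding inl_def by blast
  qed
  define k where "k M = (SOME h. liso_at M (\<beta> M) h \<and> h z = z')" for M
  have kprop: "liso_at M (\<beta> M) (k M) \<and> k M z = z'" if M: "M \<in> MM" for M
  proof -
    have "M \<in> LOB" "z \<in> lobe_verts M" using Mprop[OF M] unfolding LS_def by auto
    moreover have "\<beta> M \<in> LOB" "z' \<in> lobe_verts (\<beta> M)" using Mprop'[OF M] unfolding LS_def by auto
    ultimately have "\<exists>h. liso_at M (\<beta> M) h \<and> h z = z'" using root_iso by blast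
    then show ?thesis unfolding k_def by (rule someI_ex)
  qed
  have kbij: "bij_betw (k M) (lobe_verts M) (lobe_verts (\<beta> M))" and kz: "k M z = z'"
    and kiso: "\<And>a b. a \<in> lobe_verts M \<Longrightarrow> b \<in> lobe_verts M \<Longrightarrow> lobe_adj M a b \<longleftrightarrow> lobe_adj (\<beta> M) (k M a) (k M b)"
    if M: "M \<in> MM" for M
    using kprop[OF M] unfolding liso_at_def by auto
  have MLOB: "M \<in> LOB" "z \<in> lobe_verts M" if "M \<in> MM" for M using Mprop[OF that] unfolding LS_def by auto
  have MLOB': "\<beta> M \<in> LOB" "z' \<in> lobe_verts (\<beta> M)" if "M \<in> MM" for M using Mprop'[OF that] unfolding LS_def by auto
  have lvMD: "lobe_verts M \<inter> D = {z}" if "M \<in> MM" for M using KL[OF hD zD] Mprop[OF that] by blast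
  have lvMD': "lobe_verts (\<beta> M) \<inter> D' = {z'}" if "M \<in> MM" for M using KL[OF hD' zD'] Mprop'[OF that] by blast
  define NEW where "NEW = {(a, k M a) | M a. M \<in> MM \<and> a \<in> lobe_verts M \<and> a \<noteq> z}"
  define F' where "F' = F \<union> NEW"
  have newE: "\<exists>M. M \<in> MM \<and> a \<in> lobe_verts M \<and> a \<noteq> z \<and> a' = k M a" if "(a, a') \<in> NEW" for a a'
    using that unfolding NEW_def by blast
  have newP: "a \<notin> D \<and> k M a \<in> lobe_verts (\<beta> M) \<and> k M a \<noteq> z' \<and> k M a \<notin> D'"
    if M: "M \<in> MM" and a: "a \<in> lobe_verts M" "a \<noteq> z" for M a
  proof -
    have "a \<notin> D" using lvMD[OF M] a by blast
    moreover have ka: "k M a \<in> lobe_verts (\<beta> M)" using kbij[OF M] a unfolding bij_betw_def by blast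
    moreover have "k M a \<noteq> z'"
    proof
      assume "k M a = z'"
      then have "k M a = k M z" using kz[OF M] by simp
      then show False using kbij[OF M] a MLOB[OF M] unfolding bij_betw_def inj_on_def by blast
    qed
    moreover then have "k M a \<notin> D'" using lvMD'[OF M] ka by blast
    ultimately show ?thesis by blast
  qed
  have MMsame: "M1 = M2" if "M1 \<in> MM" "M2 \<in> MM" "a \<in> lobe_verts M1" "a \<in> lobe_verts M2" "a \<noteq> z" for M1 M2 a
    using two_lobes[OF MLOB(1)[OF that(1)] MLOB(1)[OF that(2)]] MLOB that by blast
  have MMsame': "M1 = M2" if "M1 \<in> MM" "M2 \<in> MM" "b \<in> lobe_verts (\<beta> M1)" "b \<in> lobe_verts (\<beta> M2)" "b \<noteq> z'"
    for M1 M2 b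
  proof -
    have "\<beta> M1 = \<beta> M2" using two_lobes[OF MLOB'(1)[OF that(1)] MLOB'(1)[OF that(2)]] MLOB' that by blast
    then show ?thesis using \<beta>inj that by blast
  qed
  have DomF': "Domain F' = Dp D z"
  proof
    show "Domain F' \<subseteq> Dp D z"
    proof
      fix x assume "x \<in> Domain F'"
      then consider "x \<in> D" | "\<exists>x'. (x, x') \<in> NEW" unfolding F'_def D_def by blast
      then show "x \<in> Dp D z"
      proof cases
        case 1 then show ?thesis unfolding Dp_def by blast
      next
        case 2
        then obtain M where "M \<in> MM" "x \<in> lobe_verts M" using newE by blast
        then show ?thesis using Mprop unfolding Dp_def by blast
      qed
    qed
  next
    show "Dp D z \<subseteq> Domain F'"
    proof
      fix x assume "x \<in> Dp D z"
      then consider "x \<in> D" | M where "M \<in> LS z" "x \<in> lobe_verts M" unfolding Dp_def by blast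
      then show "x \<in> Domain F'"
      proof cases
        case 1 then show ?thesis unfolding F'_def D_def by blast
      next
        case 2
        show ?thesis
        proof (cases "x = z \<or> M = M0")
          case True
          then have "x \<in> D" using zD M0D 2 by blast
          then show ?thesis unfolding F'_def D_def by blast
        next
          case False
          then have "M \<in> MM" "x \<noteq> z" using 2 unfolding MM_def by auto
          then have "(x, k M x) \<in> NEW" using 2 unfolding NEW_def by blast
          then show ?thesis unfolding F'_def by blast
        qed
      qed
    qed
  qed
  have RanF': "Range F' = Dp D' z'"
  proof
    show "Range F' \<subseteq> Dp D' z'"
    proof
      fix x assume "x \<in> Range F'"
      then consider "x \<in> D'" | "\<exists>a. (a, x) \<in> NEW" unfolding F'_def D'_def by blast
      then show "x \<in> Dp D' z'"
      proof cases
        case 1 then show ?thesis unfolding Dp_def by blast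
      next
        case 2
        then obtain a M where "M \<in> MM" "a \<in> lobe_verts M" "a \<noteq> z" "x = k M a" using newE by blast
        then have "x \<in> lobe_verts (\<beta> M)" "\<beta> M \<in> LS z'" using newP Mprop' by blast+
        then show ?thesis unfolding Dp_def by blast
      qed
    qed
  next
    show "Dp D' z' \<subseteq> Range F'"
    proof
      fix x assume "x \<in> Dp D' z'"
      then consider "x \<in> D'" | M' where "M' \<in> LS z'" "x \<in> lobe_verts M'" unfolding Dp_def by blast
      then show "x \<in> Range F'"
      proof cases
        case 1 then show ?thesis unfolding F'_def D'_def by blast
      next
        case 2
        show ?thesis
        proof (cases "x = z' \<or> M' = M0'")
          case True
          then have "x \<in> D'" using zD' M0D 2 by blast
          then show ?thesis unfolding F'_def D'_def by blast
        next
          case False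
          then have "M' \<in> MM'" "x \<noteq> z'" using 2 unfolding MM'_def by auto
          then obtain M where M: "M \<in> MM" "M' = \<beta> M" using \<beta>surj by blast
          then have "x \<in> k M ` lobe_verts M" using kbij[OF M(1)] 2 unfolding bij_betw_def by simp
          then obtain a where a: "a \<in> lobe_verts M" "x = k M a" by blast
          then have "a \<noteq> z" using kz[OF M(1)] \<open>x \<noteq> z'\<close> by blast
          then have "(a, x) \<in> NEW" using a M unfolding NEW_def by blast
          then show ?thesis unfolding F'_def by blast
        qed
      qed
    qed
  qed
  have adjFN: "E a b \<longleftrightarrow> E a' b'" if aa: "(a, a') \<in> F" and bb: "(b, b') \<in> NEW" for a a' b b'
  proof -
    obtain M where M: "M \<in> MM" "b \<in> lobe_verts M" "b \<noteq> z" "b' = k M b" using newE[OF bb] by blast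
    have bP: "b' \<in> lobe_verts (\<beta> M)" "b' \<noteq> z'" using newP[OF M(1-3)] M(4) by auto
    have aD: "a \<in> D" "a' \<in> D'" using aa D_def D'_def by blast+
    show ?thesis
    proof
      assume E1: "E a b"
      have az: "a = z" using MIX[OF hD zD _ _ aD(1) M(2) M(3) E1] Mprop[OF M(1)] by blast
      then have a'z: "a' = z'" using sv aa zz by blast
      have "{z, b} \<in> M" using edge_in[OF MLOB(1)[OF M(1)] MLOB(2)[OF M(1)] M(2)] E1 az by blast
      then have "lobe_adj M z b" using lobe_adj_iff[OF MLOB(1)[OF M(1)]] by blast
      then have "lobe_adj (\<beta> M) z' b'" using kiso[OF M(1) MLOB(2)[OF M(1)] M(2)] kz[OF M(1)] M(4) by simp
      then show "E a' b'" using lobe_adjE[OF MLOB'(1)[OF M(1)]] a'z by blast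
    next
      assume E2: "E a' b'"
      have a'z: "a' = z'" using MIX[OF hD' zD' _ _ aD(2) bP(1) bP(2) E2] Mprop'[OF M(1)] by blast
      then have az: "a = z" using ij aa zz by blast
      have "{z', b'} \<in> \<beta> M" using edge_in[OF MLOB'(1)[OF M(1)] MLOB'(2)[OF M(1)] bP(1)] E2 a'z by blast
      then have "lobe_adj (\<beta> M) z' b'" using lobe_adj_iff[OF MLOB'(1)[OF M(1)]] by blast
      then have "lobe_adj M z b" using kiso[OF M(1) MLOB(2)[OF M(1)] M(2)] kz[OF M(1)] M(4) by simp
      then show "E a b" using lobe_adjE[OF MLOB(1)[OF M(1)]] az by blast
    qed
  qed
  have adjNN: "E a b \<longleftrightarrow> E a' b'" if aa: "(a, a') \<in> NEW" and bb: "(b, b') \<in> NEW" for a a' b b'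
  proof -
    obtain M1 where M1: "M1 \<in> MM" "a \<in> lobe_verts M1" "a \<noteq> z" "a' = k M1 a" using newE[OF aa] by blast
    obtain M2 where M2: "M2 \<in> MM" "b \<in> lobe_verts M2" "b \<noteq> z" "b' = k M2 b" using newE[OF bb] by blast
    have aP: "a' \<in> lobe_verts (\<beta> M1)" "a' \<noteq> z'" using newP[OF M1(1-3)] M1(4) by auto
    have bP: "b' \<in> lobe_verts (\<beta> M2)" "b' \<noteq> z'" using newP[OF M2(1-3)] M2(4) by auto
    show ?thesis
    proof (cases "M1 = M2")
      case True
      have L1: "M1 \<in> LOB" "\<beta> M1 \<in> LOB" using MLOB MLOB' M1 by blast+
      have "E a b \<longleftrightarrow> lobe_adj M1 a b"
        using edge_in[OF L1(1) M1(2)] M2(2) True lobe_adj_iff[OF L1(1)] lobe_adjE[OF L1(1)] by blast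
      also have "\<dots> \<longleftrightarrow> lobe_adj (\<beta> M1) a' b'" using kiso[OF M1(1) M1(2)] M2(2) True M1(4) M2(4) by simp
      also have "\<dots> \<longleftrightarrow> E a' b'"
        using edge_in[OF L1(2) aP(1)] bP(1) True lobe_adj_iff[OF L1(2)] lobe_adjE[OF L1(2)] by blast
      finally show ?thesis .
    next
      case False
      have "\<not> E a b" using SEP2[OF hD zD _ _ _ _ False M1(2,3) M2(2,3)] Mprop M1(1) M2(1) by blast
      moreover have "\<beta> M1 \<noteq> \<beta> M2" using False \<beta>inj M1(1) M2(1) by blast
      then have "\<not> E a' b'" using SEP2[OF hD' zD' _ _ _ _ _ aP bP] Mprop' M1(1) M2(1) by blast
      ultimately show ?thesis by blast
    qed
  qed
  have NEWV: "NEW \<subseteq> V \<times> V"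
  proof
    fix p assume "p \<in> NEW"
    then obtain a a' where p: "p = (a, a')" "(a, a') \<in> NEW" by (cases p) auto
    then obtain M where M: "M \<in> MM" "a \<in> lobe_verts M" "a \<noteq> z" "a' = k M a" using newE by blast
    then have "a' \<in> lobe_verts (\<beta> M)" using newP by blast
    then show "p \<in> V \<times> V" using lv_V MLOB MLOB' M p by blast
  qed
  have goodF': "good F'"
  proof (rule goodI)
    show "F' \<subseteq> V \<times> V" using goodD(1)[OF g] NEWV unfolding F'_def by blast
  next
    fix a b c assume ab: "(a, b) \<in> F'" and ac: "(a, c) \<in> F'"
    show "b = c"
    proof (cases "(a, b) \<in> F")
      case True
      show ?thesis
      proof (cases "(a, c) \<in> F")
        case True then show ?thesis using sv \<open>(a, b) \<in> F\<close> by blast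
      next
        case False
        then have "(a, c) \<in> NEW" using ac unfolding F'_def by blast
        then have "a \<notin> D" using newE newP by blast
        then show ?thesis using \<open>(a, b) \<in> F\<close> D_def by blast
      qed
    next
      case False
      then have n1: "(a, b) \<in> NEW" using ab unfolding F'_def by blast
      then have aD: "a \<notin> D" using newE newP by blast
      then have "(a, c) \<in> NEW" using ac D_def unfolding F'_def by blast
      then obtain M2 where M2: "M2 \<in> MM" "a \<in> lobe_verts M2" "a \<noteq> z" "c = k M2 a" using newE by blast
      obtain M1 where M1: "M1 \<in> MM" "a \<in> lobe_verts M1" "a \<noteq> z" "b = k M1 a" using newE[OF n1] by blast
      have "M1 = M2" using MMsame M1 M2 by blast
      then show ?thesis using M1 M2 by simp
    qed
  next
    fix a b c assume ac: "(a, c) \<in> F'" and bc: "(b, c) \<in> F'"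
    show "a = b"
    proof (cases "(a, c) \<in> F")
      case True
      show ?thesis
      proof (cases "(b, c) \<in> F")
        case True then show ?thesis using ij \<open>(a, c) \<in> F\<close> by blast
      next
        case False
        then have "(b, c) \<in> NEW" using bc unfolding F'_def by blast
        then have "c \<notin> D'" using newE newP by blast
        then show ?thesis using \<open>(a, c) \<in> F\<close> D'_def by blast
      qed
    next
      case False
      then have n1: "(a, c) \<in> NEW" using ac unfolding F'_def by blast
      then have cD: "c \<notin> D'" using newE newP by blast
      then have n2: "(b, c) \<in> NEW" using bc D'_def unfolding F'_def by blast
      obtain M1 where M1: "M1 \<in> MM" "a \<in> lobe_verts M1" "a \<noteq> z" "c = k M1 a" using newE[OF n1] by blast
      obtain M2 where M2: "M2 \<in> MM" "b \<in> lobe_verts M2" "b \<noteq> z" "c = k M2 b" using newE[OF n2] by blast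
      have c1: "c \<in> lobe_verts (\<beta> M1)" "c \<noteq> z'" using newP[OF M1(1-3)] M1(4) by auto
      have c2: "c \<in> lobe_verts (\<beta> M2)" using newP[OF M2(1-3)] M2(4) by auto
      have "M1 = M2" using MMsame' M1(1) M2(1) c1 c2 by blast
      then have "k M1 a = k M1 b" using M1(4) M2(4) by simp
      then show ?thesis using kbij[OF M1(1)] M1(2) M2(2) \<open>M1 = M2\<close> unfolding bij_betw_def inj_on_def by blast
    qed
  next
    fix a a' b b' assume aa: "(a, a') \<in> F'" and bb: "(b, b') \<in> F'"
    consider "(a, a') \<in> F" "(b, b') \<in> F" | "(a, a') \<in> F" "(b, b') \<in> NEW"
      | "(a, a') \<in> NEW" "(b, b') \<in> F" | "(a, a') \<in> NEW" "(b, b') \<in> NEW"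
      using aa bb unfolding F'_def by blast
    then show "E a b \<longleftrightarrow> E a' b'"
    proof cases
      case 1 then show ?thesis using goodD(4)[OF g] by blast
    next
      case 2 then show ?thesis using adjFN by blast
    next
      case 3 then have "E b a \<longleftrightarrow> E b' a'" using adjFN by blast
      then show ?thesis using E_sym by blast
    next
      case 4 then show ?thesis using adjNN by blast
    qed
  next
    show "closedD (Domain F')" using closed_ext[OF hD zD] DomF' by simp
  next
    show "closedD (Range F')" using closed_ext[OF hD' zD'] RanF' by simp
  next
    fix w w' assume ww: "(w, w') \<in> F'"
    have DpD: "D \<subseteq> Dp D z" "D' \<subseteq> Dp D' z'" unfolding Dp_def by blast+
    show "compl F' w w' \<or> sing F' w w'"
    proof (cases "(w, w') \<in> F")
      case True
      show ?thesis
      proof (cases "w = z")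
        case wz: True
        then have w'z: "w' = z'" using sv True zz by blast
        have "inl (Dp D z) z = LS z" unfolding inl_def Dp_def by blast
        moreover have "inl (Dp D' z') z' = LS z'" unfolding inl_def Dp_def by blast
        ultimately have "compl F' w w'" unfolding compl_def using DomF' RanF' wz w'z by simp
        then show ?thesis by blast
      next
        case wz: False
        have w'z: "w' \<noteq> z'" using ij True zz wz by blast
        have wD: "w \<in> D" "w' \<in> D'" using True D_def D'_def by blast+
        have e1: "inl (Dp D z) w = inl D w"
        proof
          show "inl (Dp D z) w \<subseteq> inl D w"
            using NL1[OF hD zD wD(1) wz] unfolding inl_def by blast
          show "inl D w \<subseteq> inl (Dp D z) w" using inl_mono[OF DpD(1)] .
        qed
        have e2: "inl (Dp D' z') w' = inl D' w'"
        proof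
          show "inl (Dp D' z') w' \<subseteq> inl D' w'"
            using NL1[OF hD' zD' wD(2) w'z] unfolding inl_def by blast
          show "inl D' w' \<subseteq> inl (Dp D' z') w'" using inl_mono[OF DpD(2)] .
        qed
        have "compl F w w' \<or> sing F w w'" using goodD(7)[OF g True] .
        then show ?thesis unfolding compl_def sing_def using e1 e2 DomF' RanF' D_def D'_def by simp
      qed
    next
      case False
      then have "(w, w') \<in> NEW" using ww unfolding F'_def by blast
      then obtain M where M: "M \<in> MM" "w \<in> lobe_verts M" "w \<noteq> z" "w' = k M w" using newE by blast
      have wP: "w \<notin> D" "w' \<in> lobe_verts (\<beta> M)" "w' \<notin> D'" using newP[OF M(1-3)] M(4) by auto
      have i1: "inl (Dp D z) w = {M}"
      proof
        show "inl (Dp D z) w \<subseteq> {M}"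
          using NL2[OF hD zD _ M(2) wP(1)] Mprop[OF M(1)] unfolding inl_def by blast
        show "{M} \<subseteq> inl (Dp D z) w"
          using MLOB[OF M(1)] M(2) Mprop[OF M(1)] unfolding inl_def Dp_def LS_def by blast
      qed
      have i2: "inl (Dp D' z') w' = {\<beta> M}"
      proof
        show "inl (Dp D' z') w' \<subseteq> {\<beta> M}"
          using NL2[OF hD' zD' _ wP(2) wP(3)] Mprop'[OF M(1)] unfolding inl_def by blast
        show "{\<beta> M} \<subseteq> inl (Dp D' z') w'"
          using MLOB'[OF M(1)] wP(2) Mprop'[OF M(1)] unfolding inl_def Dp_def LS_def by blast
      qed
      have "sing F' w w'" unfolding sing_def using i1 i2 DomF' RanF' by simp
      then show ?thesis by blast
    qed
  qed
  obtain M where M: "M \<in> MM" using MMne by blast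
  obtain w where w: "w \<in> lobe_verts M" "w \<noteq> z" using lv_other[OF MLOB[OF M]] by blast
  have "(w, k M w) \<in> F'" using M w unfolding F'_def NEW_def by blast
  moreover have "(w, k M w) \<notin> F" using newP[OF M w] D_def by blast
  ultimately have "F' \<noteq> F" by blast
  moreover have "F \<subseteq> F'" unfolding F'_def by blast
  ultimately show ?thesis using goodF' by blast
qed

end

context hyp
begin

lemma full_dom:
  assumes g: "good F" and c: "\<forall>z z'. (z, z') \<in> F \<longrightarrow> compl F z z'" and u: "u \<in> Domain F"
  shows "Domain F = V"
proof
  show "Domain F \<subseteq> V" using goodD(1)[OF g] by blast
next
  show "V \<subseteq> Domain F"
  proof
    fix w assume w: "w \<in> V"
    have uV: "u \<in> V" using goodD(1)[OF g] u by blast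
    have "(\<lambda>x y. x \<in> V \<and> y \<in> V \<and> E x y)\<^sup>*\<^sup>* u w" using conn uV w unfolding connected_graph_def by blast
    then show "w \<in> Domain F"
    proof (induction rule: rtranclp_induct)
      case base then show ?case using u .
    next
      case (step x y)
      then have xy: "E x y" "x \<in> Domain F" by auto
      then obtain x' where "(x, x') \<in> F" by blast
      then have "inl (Domain F) x = LS x" using c unfolding compl_def by blast
      moreover have "cls {x, y} \<in> LS x" using cls_lv[OF xy(1)] unfolding LS_def by blast
      ultimately have "lobe_verts (cls {x, y}) \<subseteq> Domain F" unfolding inl_def by blast
      then show ?case using cls_lv[OF xy(1)] by blast
    qed
  qed
qed

lemma full_ran:
  assumes g: "good F" and c: "\<forall>z z'. (z, z') \<in> F \<longrightarrow> compl F z z'" and u: "u \<in> Range F"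
  shows "Range F = V"
proof
  show "Range F \<subseteq> V" using goodD(1)[OF g] by blast
next
  show "V \<subseteq> Range F"
  proof
    fix w assume w: "w \<in> V"
    have uV: "u \<in> V" using goodD(1)[OF g] u by blast
    have "(\<lambda>x y. x \<in> V \<and> y \<in> V \<and> E x y)\<^sup>*\<^sup>* u w" using conn uV w unfolding connected_graph_def by blast
    then show "w \<in> Range F"
    proof (induction rule: rtranclp_induct)
      case base then show ?case using u .
    next
      case (step x y)
      then have xy: "E x y" "x \<in> Range F" by auto
      then obtain x' where "(x', x) \<in> F" by blast
      then have "inl (Range F) x = LS x" using c unfolding compl_def by blast
      moreover have "cls {x, y} \<in> LS x" using cls_lv[OF xy(1)] unfolding LS_def by blast
      ultimately have "lobe_verts (cls {x, y}) \<subseteq> Range F" unfolding inl_def by blast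
      then show ?case using cls_lv[OF xy(1)] by blast
    qed
  qed
qed

lemma construct:
  assumes uv: "E u0 v0" and xy: "E x0 y0"
  shows "\<exists>f. is_automorphism V E f \<and> f u0 = x0 \<and> f v0 = y0"
proof -
  let ?L1 = "cls {u0, v0}" and ?L2 = "cls {x0, y0}"
  have L1: "?L1 \<in> LOB" "{u0, v0} \<in> ?L1" using cls_lobe cls_self edges_iff uv by blast+
  have L2: "?L2 \<in> LOB" "{x0, y0} \<in> ?L2" using cls_lobe cls_self edges_iff xy by blast+
  obtain h where h: "liso_at ?L1 ?L2 h" "h u0 = x0" "h v0 = y0" using arc_iso[OF L1(1) L2(1) L1(2) L2(2)] by blast
  define F0 where "F0 = {(a, h a) | a. a \<in> lobe_verts ?L1}"
  have g0: "good F0" unfolding F0_def using good_init[OF L1(1) L2(1) h(1)] .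
  have uvL: "u0 \<in> lobe_verts ?L1" "v0 \<in> lobe_verts ?L1" using L1(2) unfolding lobe_verts_def by blast+
  have p0: "(u0, x0) \<in> F0" "(v0, y0) \<in> F0" unfolding F0_def using uvL h by auto
  define A where "A = {F. good F \<and> (u0, x0) \<in> F \<and> (v0, y0) \<in> F}"
  have "\<forall>C\<in>chains A. \<exists>U\<in>A. \<forall>X\<in>C. X \<subseteq> U"
  proof
    fix C assume C: "C \<in> chains A"
    show "\<exists>U\<in>A. \<forall>X\<in>C. X \<subseteq> U"
    proof (cases "C = {}")
      case True then show ?thesis using g0 p0 unfolding A_def by blast
    next
      case False
      have CA: "C \<subseteq> A" and ch: "\<forall>A\<in>C. \<forall>B\<in>C. A \<subseteq> B \<or> B \<subseteq> A"
        using C unfolding chains_def chain_subset_def by auto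
      have "good (\<Union>C)" using good_chain[OF False ch] CA unfolding A_def by blast
      moreover have "(u0, x0) \<in> \<Union>C" "(v0, y0) \<in> \<Union>C" using False CA unfolding A_def by blast+
      ultimately have "\<Union>C \<in> A" unfolding A_def by blast
      then show ?thesis by blast
    qed
  qed
  then obtain Fm where Fm: "Fm \<in> A" and mx: "\<forall>X\<in>A. Fm \<subseteq> X \<longrightarrow> X = Fm" using Zorn_Lemma2 by blast
  have gm: "good Fm" and pm: "(u0, x0) \<in> Fm" "(v0, y0) \<in> Fm" using Fm unfolding A_def by auto
  have allc: "\<forall>z z'. (z, z') \<in> Fm \<longrightarrow> compl Fm z z'"
  proof (intro allI impI)
    fix z z' assume zz: "(z, z') \<in> Fm"
    show "compl Fm z z'"
    proof (rule ccontr)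
      assume "\<not> compl Fm z z'"
      then obtain F' where F': "good F'" "Fm \<subseteq> F'" "F' \<noteq> Fm" using extend[OF gm zz] by blast
      then have "F' \<in> A" using pm unfolding A_def by blast
      then show False using mx F' by blast
    qed
  qed
  have dom: "Domain Fm = V" using full_dom[OF gm allc] pm by blast
  have ran: "Range Fm = V" using full_ran[OF gm allc] pm by blast
  have sv: "\<And>a b c. (a, b) \<in> Fm \<Longrightarrow> (a, c) \<in> Fm \<Longrightarrow> b = c" using goodD(2)[OF gm] by blast
  have ij: "\<And>a b c. (a, c) \<in> Fm \<Longrightarrow> (b, c) \<in> Fm \<Longrightarrow> a = b" using goodD(3)[OF gm] by blast
  define f where "f a = (THE b. (a, b) \<in> Fm)" for a
  have fa: "(a, f a) \<in> Fm" if aV: "a \<in> V" for a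
  proof -
    obtain b where b: "(a, b) \<in> Fm" using dom aV by blast
    have "(THE b. (a, b) \<in> Fm) = b" using b sv by blast
    then show ?thesis unfolding f_def using b by simp
  qed
  have feq: "f a = b" if ab: "(a, b) \<in> Fm" for a b
  proof -
    have "a \<in> V" using dom ab by blast
    then show ?thesis using fa sv ab by blast
  qed
  have "bij_betw f V V"
    unfolding bij_betw_def
  proof
    show "inj_on f V"
    proof (rule inj_onI)
      fix a b assume "a \<in> V" "b \<in> V" "f a = f b"
      then show "a = b" using fa ij by metis
    qed
    show "f ` V = V"
    proof
      show "f ` V \<subseteq> V" using fa ran by blast
      show "V \<subseteq> f ` V"
      proof
        fix y assume "y \<in> V"
        then obtain a where a: "(a, y) \<in> Fm" using ran by blast
        then have "a \<in> V" "f a = y" using dom feq by blast+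
        then show "y \<in> f ` V" by blast
      qed
    qed
  qed
  moreover have "\<forall>x\<in>V. \<forall>y\<in>V. E x y \<longleftrightarrow> E (f x) (f y)"
    using fa goodD(4)[OF gm] by blast
  ultimately have "is_automorphism V E f" unfolding is_automorphism_def by blast
  moreover have "f u0 = x0" "f v0 = y0" using feq pm by blast+
  ultimately show ?thesis by blast
qed

end

context sg
begin

lemma image_id_on: "(\<And>x. x \<in> A \<Longrightarrow> h x = x) \<Longrightarrow> h ` A = A"
  using image_cong[of A A h id] by simp

lemma image_comp_id:
  assumes "A \<subseteq> B" "\<And>x. x \<in> B \<Longrightarrow> g (f x) = x"
  shows "g ` (f ` A) = A"
proof -
  have "(\<lambda>x. g (f x)) ` A = A" using assms by (intro image_id_on) blast
  then show ?thesis by (simp add: image_image)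
qed

definition img :: "('a \<Rightarrow> 'a) \<Rightarrow> 'a set set \<Rightarrow> 'a set set" where
  "img f L = (\<lambda>e. f ` e) ` L"

lemma aut_bij: "is_automorphism V E f \<Longrightarrow> bij_betw f V V"
  unfolding is_automorphism_def by blast

lemma aut_E: "is_automorphism V E f \<Longrightarrow> x \<in> V \<Longrightarrow> y \<in> V \<Longrightarrow> E x y \<longleftrightarrow> E (f x) (f y)"
  unfolding is_automorphism_def by blast

lemma aut_inv:
  assumes f: "is_automorphism V E f"
  shows "is_automorphism V E (inv_into V f)" "\<And>x. x \<in> V \<Longrightarrow> f (inv_into V f x) = x"
    "\<And>x. x \<in> V \<Longrightarrow> inv_into V f (f x) = x"
proof -
  have b: "bij_betw f V V" using aut_bij[OF f] .
  show fi: "\<And>x. x \<in> V \<Longrightarrow> f (inv_into V f x) = x" using b by (meson bij_betw_inv_into_right)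
  show "\<And>x. x \<in> V \<Longrightarrow> inv_into V f (f x) = x" using b by (meson bij_betw_inv_into_left)
  have bi: "bij_betw (inv_into V f) V V" using bij_betw_inv_into[OF b] .
  have "E x y \<longleftrightarrow> E (inv_into V f x) (inv_into V f y)" if "x \<in> V" "y \<in> V" for x y
  proof -
    have "inv_into V f x \<in> V" "inv_into V f y \<in> V" using bi that unfolding bij_betw_def by blast+
    then have "E (inv_into V f x) (inv_into V f y) \<longleftrightarrow> E (f (inv_into V f x)) (f (inv_into V f y))"
      using aut_E[OF f] by blast
    then show ?thesis using fi that by simp
  qed
  then show "is_automorphism V E (inv_into V f)" unfolding is_automorphism_def using bi by blast
qed

lemma edges_V: "e \<in> edges E \<Longrightarrow> e \<subseteq> V"
proof -
  assume "e \<in> edges E"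
  then obtain x y where "e = {x, y}" "E x y" using edgesE by blast
  then show ?thesis using E_V by blast
qed

lemma aut_fV: "is_automorphism V E f \<Longrightarrow> x \<in> V \<Longrightarrow> f x \<in> V"
  using aut_bij unfolding bij_betw_def by blast

lemma aut_edges: "is_automorphism V E f \<Longrightarrow> e \<in> edges E \<Longrightarrow> f ` e \<in> edges E"
proof -
  assume f: "is_automorphism V E f" and e: "e \<in> edges E"
  then obtain x y where "e = {x, y}" "E x y" using edgesE by blast
  moreover then have "E (f x) (f y)" using aut_E[OF f] E_V by blast
  then have "{f x, f y} \<in> edges E" using edges_iff by blast
  ultimately show ?thesis by simp
qed

lemma aut_cycle:
  assumes f: "is_automorphism V E f" and c: "is_cycle V E c"
  shows "is_cycle V E (map f c) \<and> cycle_edges (map f c) = (\<lambda>e. f ` e) ` cycle_edges c"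
proof -
  have cV: "set c \<subseteq> V" and d: "distinct c" and l: "length c \<ge> 3"
    and a: "\<forall>i < length c. E (c ! i) (c ! ((i + 1) mod length c))" using c unfolding is_cycle_def by auto
  have inj: "inj_on f V" using aut_bij[OF f] unfolding bij_betw_def by blast
  have "distinct (map f c)" using d inj cV by (simp add: distinct_map inj_on_subset)
  moreover have "set (map f c) \<subseteq> V" using cV aut_fV[OF f] by auto
  moreover have "\<forall>i < length (map f c). E (map f c ! i) (map f c ! ((i + 1) mod length (map f c)))"
  proof (intro allI impI)
    fix i assume i: "i < length (map f c)"
    then have "0 < length c" by (cases c) simp_all
    then have "(i + 1) mod length c < length c" using mod_less_divisor by blast
    then have "c ! i \<in> V" "c ! ((i + 1) mod length c) \<in> V" using i cV by auto
    moreover have "E (c ! i) (c ! ((i + 1) mod length c))" using a i by simp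
    ultimately have "E (f (c ! i)) (f (c ! ((i + 1) mod length c)))" using aut_E[OF f] by blast
    then show "E (map f c ! i) (map f c ! ((i + 1) mod length (map f c)))"
      using i \<open>(i + 1) mod length c < length c\<close> by simp
  qed
  ultimately have "is_cycle V E (map f c)" using l unfolding is_cycle_def by simp
  moreover have "cycle_edges (map f c) = (\<lambda>e. f ` e) ` cycle_edges c"
  proof -
    have nth: "{map f c ! i, map f c ! ((i + 1) mod length (map f c))} = f ` {c ! i, c ! ((i + 1) mod length c)}"
      if i: "i < length c" for i
    proof -
      have "0 < length c" using i by (cases c) simp_all
      then have "(i + 1) mod length c < length c" using mod_less_divisor by blast
      then show ?thesis using i by simp
    qed
    show ?thesis
    proof (rule set_eqI, rule iffI)
      fix x assume "x \<in> cycle_edges (map f c)"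
      then obtain i where "x = {map f c ! i, map f c ! ((i + 1) mod length (map f c))}" "i < length c"
        unfolding cycle_edges_def by auto
      then have "x = f ` {c ! i, c ! ((i + 1) mod length c)}" "i < length c" using nth by auto
      then show "x \<in> (\<lambda>e. f ` e) ` cycle_edges c" unfolding cycle_edges_def by blast
    next
      fix x assume "x \<in> (\<lambda>e. f ` e) ` cycle_edges c"
      then obtain i where "x = f ` {c ! i, c ! ((i + 1) mod length c)}" "i < length c"
        unfolding cycle_edges_def by auto
      then have "x = {map f c ! i, map f c ! ((i + 1) mod length (map f c))}" "i < length (map f c)"
        using nth by auto
      then show "x \<in> cycle_edges (map f c)" unfolding cycle_edges_def by blast
    qed
  qed
  ultimately show ?thesis by blast
qed

lemma aut_equiv:
  assumes f: "is_automorphism V E f" and eq: "edge_equiv V E e1 e2"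
  shows "edge_equiv V E (f ` e1) (f ` e2)"
proof (cases "e1 = e2")
  case True then show ?thesis unfolding edge_equiv_def by simp
next
  case False
  then obtain c where c: "is_cycle V E c" "e1 \<in> cycle_edges c" "e2 \<in> cycle_edges c"
    using eq unfolding edge_equiv_def by blast
  then have "is_cycle V E (map f c)" "f ` e1 \<in> cycle_edges (map f c)" "f ` e2 \<in> cycle_edges (map f c)"
    using aut_cycle[OF f c(1)] by auto
  then show ?thesis unfolding edge_equiv_def by blast
qed

lemma img_img:
  assumes f: "is_automorphism V E f" and L: "L \<in> LOB"
  shows "img (inv_into V f) (img f L) = L"
proof -
  have "inv_into V f ` (f ` e) = e" if "e \<in> L" for e
  proof -
    have "e \<in> edges E" using that lobe_sub[OF L] by blast
    then have "e \<subseteq> V" by (rule edges_V)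
    then show ?thesis by (rule image_comp_id[of _ V "inv_into V f" f, OF _ aut_inv(3)[OF f]])
  qed
  then show ?thesis unfolding img_def image_image by simp
qed

lemma img_cls:
  assumes f: "is_automorphism V E f" and e0: "e0 \<in> edges E"
  shows "img f (cls e0) = cls (f ` e0)"
proof
  show "img f (cls e0) \<subseteq> cls (f ` e0)"
  proof
    fix x assume "x \<in> img f (cls e0)"
    then obtain e where e: "e \<in> cls e0" "x = f ` e" unfolding img_def by blast
    then have "e \<in> edges E" "edge_equiv V E e0 e" unfolding cls_def by auto
    then have "f ` e \<in> edges E" "edge_equiv V E (f ` e0) (f ` e)"
      using aut_edges[OF f] aut_equiv[OF f] by blast+
    then show "x \<in> cls (f ` e0)" unfolding cls_def using e(2) by blast
  qed
next
  show "cls (f ` e0) \<subseteq> img f (cls e0)"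
  proof
    fix e' assume e': "e' \<in> cls (f ` e0)"
    let ?g = "inv_into V f"
    have g: "is_automorphism V E ?g" using aut_inv(1)[OF f] .
    have e'E: "e' \<in> edges E" "edge_equiv V E (f ` e0) e'" using e' unfolding cls_def by auto
    have "edge_equiv V E (?g ` (f ` e0)) (?g ` e')" using aut_equiv[OF g e'E(2)] .
    moreover have "?g ` (f ` e0) = e0"
    proof -
      have "e0 \<subseteq> V" using edges_V e0 by blast
      then show ?thesis by (rule image_comp_id[of _ V "inv_into V f" f, OF _ aut_inv(3)[OF f]])
    qed
    ultimately have "?g ` e' \<in> cls e0" using aut_edges[OF g e'E(1)] unfolding cls_def by simp
    moreover have "f ` (?g ` e') = e'"
    proof -
      have "e' \<subseteq> V" using edges_V e'E by blast
      then show ?thesis by (rule image_comp_id[of _ V f "inv_into V f", OF _ aut_inv(2)[OF f]])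
    qed
    ultimately show "e' \<in> img f (cls e0)" unfolding img_def by (metis image_eqI)
  qed
qed

lemma img_lobe:
  assumes f: "is_automorphism V E f" and L: "L \<in> LOB"
  shows "img f L \<in> LOB"
proof -
  obtain e0 where e0: "L = cls e0" "e0 \<in> edges E" using L unfolding lobes_def cls_def by blast
  then show ?thesis using img_cls[OF f e0(2)] cls_lobe aut_edges[OF f] by simp
qed

lemma img_lv:
  "lobe_verts (img f L) = f ` lobe_verts L"
  unfolding img_def lobe_verts_def by blast

lemma img_adj:
  assumes f: "is_automorphism V E f" and L: "L \<in> LOB" and a: "a \<in> V" and b: "b \<in> V"
  shows "lobe_adj (img f L) (f a) (f b) \<longleftrightarrow> lobe_adj L a b"
proof -
  have inj: "inj_on f V" using aut_bij[OF f] unfolding bij_betw_def by blast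
  have "{f a, f b} \<in> img f L \<longleftrightarrow> {a, b} \<in> L"
  proof
    assume "{a, b} \<in> L"
    then have "f ` {a, b} \<in> img f L" unfolding img_def by blast
    then show "{f a, f b} \<in> img f L" by simp
  next
    assume "{f a, f b} \<in> img f L"
    then obtain e where e: "e \<in> L" "f ` e = {f a, f b}" unfolding img_def by auto
    have "e \<subseteq> V" using e L lobe_sub edges_V by blast
    moreover have "f ` e = f ` {a, b}" using e by simp
    ultimately have "e = {a, b}" using inj a b inj_on_image_eq_iff[of f V e "{a, b}"] by blast
    then show "{a, b} \<in> L" using e by simp
  qed
  moreover have "f a \<noteq> f b \<longleftrightarrow> a \<noteq> b" using inj a b unfolding inj_on_def by blast
  ultimately show ?thesis unfolding lobe_adj_def by blast
qed

lemma lv_img_eq: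
  assumes f: "is_automorphism V E f" and L: "L \<in> LOB" and M: "M \<in> LOB" and e: "{x, y} \<in> L" "f ` {x, y} \<in> M"
  shows "img f L = M"
proof -
  have "f ` {x, y} \<in> img f L" using e unfolding img_def by blast
  then show ?thesis using lobes_disj[OF img_lobe[OF f L] M] e by blast
qed

lemma lobe_iso_by_aut:
  assumes f: "is_automorphism V E f" and L: "L \<in> LOB"
  shows "bij_betw f (lobe_verts L) (lobe_verts (img f L))"
    "\<forall>a\<in>lobe_verts L. \<forall>b\<in>lobe_verts L. lobe_adj L a b \<longleftrightarrow> lobe_adj (img f L) (f a) (f b)"
proof -
  have inj: "inj_on f V" using aut_bij[OF f] unfolding bij_betw_def by blast
  show "bij_betw f (lobe_verts L) (lobe_verts (img f L))"
    unfolding bij_betw_def img_lv using inj_on_subset[OF inj lv_V[OF L]] by blast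
  show "\<forall>a\<in>lobe_verts L. \<forall>b\<in>lobe_verts L. lobe_adj L a b \<longleftrightarrow> lobe_adj (img f L) (f a) (f b)"
    using img_adj[OF f L] lv_V[OF L] by blast
qed

end

theorem forward:
  assumes s: "simple_graph V E" and c: "connectivity_one V E" and at: "arc_transitive V E"
  shows "(\<forall>L\<in>lobes V E. arc_transitive (lobe_verts L) (lobe_adj L)) \<and>
      (\<forall>L1\<in>lobes V E. \<forall>L2\<in>lobes V E.
          graph_iso (lobe_verts L1) (lobe_adj L1) (lobe_verts L2) (lobe_adj L2)) \<and>
      (\<forall>u\<in>V. \<forall>v\<in>V. {L \<in> lobes V E. u \<in> lobe_verts L} \<approx> {L \<in> lobes V E. v \<in> lobe_verts L})"
proof -
  interpret sg V E using s by unfold_locales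
  have conn: "connected_graph V E" and two: "\<exists>u\<in>V. \<exists>w\<in>V. u \<noteq> w"
    using c unfolding connectivity_one_def by auto
  have atr: "\<And>u v x y. E u v \<Longrightarrow> E x y \<Longrightarrow> \<exists>f. is_automorphism V E f \<and> f u = x \<and> f v = y"
    using at E_V unfolding arc_transitive_def by blast
  have nb: "\<exists>a'. E a a'" if aV: "a \<in> V" for a
  proof -
    obtain w where w: "w \<in> V" "w \<noteq> a" using two aV by metis
    have "(\<lambda>x y. x \<in> V \<and> y \<in> V \<and> E x y)\<^sup>*\<^sup>* a w" using conn aV w unfolding connected_graph_def by blast
    then show ?thesis using w(2) by (metis (no_types, lifting) converse_rtranclpE)
  qed
  have P1: "\<forall>L\<in>lobes V E. arc_transitive (lobe_verts L) (lobe_adj L)"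
  proof
    fix L assume L: "L \<in> LOB"
    show "arc_transitive (lobe_verts L) (lobe_adj L)"
      unfolding arc_transitive_def
    proof (intro allI impI)
      fix u v x y assume h: "u \<in> lobe_verts L \<and> v \<in> lobe_verts L \<and> lobe_adj L u v \<and>
        x \<in> lobe_verts L \<and> y \<in> lobe_verts L \<and> lobe_adj L x y"
      have uv: "E u v" "{u, v} \<in> L" and xy: "E x y" "{x, y} \<in> L" using h lobe_adjE[OF L] by blast+
      obtain f where f: "is_automorphism V E f" "f u = x" "f v = y" using atr[OF uv(1) xy(1)] by blast
      have "img f L = L" using lv_img_eq[OF f(1) L L uv(2)] f xy by simp
      then have "is_automorphism (lobe_verts L) (lobe_adj L) f"
        using lobe_iso_by_aut[OF f(1) L] unfolding is_automorphism_def by simp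
      then show "\<exists>f. is_automorphism (lobe_verts L) (lobe_adj L) f \<and> f u = x \<and> f v = y" using f by blast
    qed
  qed
  have P2: "\<forall>L1\<in>lobes V E. \<forall>L2\<in>lobes V E.
          graph_iso (lobe_verts L1) (lobe_adj L1) (lobe_verts L2) (lobe_adj L2)"
  proof (intro ballI)
    fix L1 L2 assume L1: "L1 \<in> LOB" and L2: "L2 \<in> LOB"
    obtain u v where uv: "{u, v} \<in> L1" "E u v" using lobe_ex[OF L1] by blast
    obtain x y where xy: "{x, y} \<in> L2" "E x y" using lobe_ex[OF L2] by blast
    obtain f where f: "is_automorphism V E f" "f u = x" "f v = y" using atr[OF uv(2) xy(2)] by blast
    have "img f L1 = L2" using lv_img_eq[OF f(1) L1 L2 uv(1)] f xy by simp
    then show "graph_iso (lobe_verts L1) (lobe_adj L1) (lobe_verts L2) (lobe_adj L2)"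
      using lobe_iso_by_aut[OF f(1) L1] unfolding graph_iso_def by metis
  qed
  have P3: "\<forall>u\<in>V. \<forall>v\<in>V. {L \<in> lobes V E. u \<in> lobe_verts L} \<approx> {L \<in> lobes V E. v \<in> lobe_verts L}"
  proof (intro ballI)
    fix u v assume u: "u \<in> V" and v: "v \<in> V"
    obtain u' where u': "E u u'" using nb[OF u] by blast
    obtain v' where v': "E v v'" using nb[OF v] by blast
    obtain f where f: "is_automorphism V E f" "f u = v" using atr[OF u' v'] by blast
    let ?g = "inv_into V f"
    have g: "is_automorphism V E ?g" using aut_inv(1)[OF f(1)] .
    have gv: "?g v = u" using aut_inv(3)[OF f(1) u] f(2) by simp
    have "bij_betw (img f) {L \<in> LOB. u \<in> lobe_verts L} {L \<in> LOB. v \<in> lobe_verts L}"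
      unfolding bij_betw_def
    proof
      show "inj_on (img f) {L \<in> LOB. u \<in> lobe_verts L}"
        by (rule inj_onI) (metis (no_types, lifting) img_img[OF f(1)] mem_Collect_eq)
      show "img f ` {L \<in> LOB. u \<in> lobe_verts L} = {L \<in> LOB. v \<in> lobe_verts L}"
      proof
        show "img f ` {L \<in> LOB. u \<in> lobe_verts L} \<subseteq> {L \<in> LOB. v \<in> lobe_verts L}"
          using img_lobe[OF f(1)] img_lv f(2) by auto
      next
        show "{L \<in> LOB. v \<in> lobe_verts L} \<subseteq> img f ` {L \<in> LOB. u \<in> lobe_verts L}"
        proof
          fix M assume M: "M \<in> {L \<in> LOB. v \<in> lobe_verts L}"
          have HML: "img ?g M \<in> LOB" "u \<in> lobe_verts (img ?g M)"
            using img_lobe[OF g] img_lv gv M by auto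
          have "img f (img ?g M) = M"
          proof -
            have "img (inv_into V ?g) (img ?g M) = M" using img_img[OF g] M by blast
            moreover have "img (inv_into V ?g) (img ?g M) = img f (img ?g M)"
            proof -
              have "inv_into V ?g x = f x" if "x \<in> V" for x
              proof -
                have "f x \<in> V" using aut_fV[OF f(1) that] .
                moreover have "?g (f x) = x" using aut_inv(3)[OF f(1) that] .
                ultimately show ?thesis using aut_inv(3)[OF g, of "f x"] by simp
              qed
              moreover have "\<forall>e\<in>img ?g M. e \<subseteq> V" using HML(1) lobe_sub edges_V by blast
              ultimately show ?thesis unfolding img_def by (auto intro!: image_cong)
            qed
            ultimately show ?thesis by simp
          qed
          then show "M \<in> img f ` {L \<in> LOB. u \<in> lobe_verts L}" using HML by force
        qed
      qed
    qed
    then show "{L \<in> lobes V E. u \<in> lobe_verts L} \<approx> {L \<in> lobes V E. v \<in> lobe_verts L}"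
      unfolding eqpoll_def by blast
  qed
  show ?thesis using P1 P2 P3 by blast
qed

theorem backward:
  assumes s: "simple_graph V E" and c: "connectivity_one V E"
    and h: "(\<forall>L\<in>lobes V E. arc_transitive (lobe_verts L) (lobe_adj L)) \<and>
      (\<forall>L1\<in>lobes V E. \<forall>L2\<in>lobes V E.
          graph_iso (lobe_verts L1) (lobe_adj L1) (lobe_verts L2) (lobe_adj L2)) \<and>
      (\<forall>u\<in>V. \<forall>v\<in>V. {L \<in> lobes V E. u \<in> lobe_verts L} \<approx> {L \<in> lobes V E. v \<in> lobe_verts L})"
  shows "arc_transitive V E"
proof -
  have conn: "connected_graph V E" using c unfolding connectivity_one_def by auto
  interpret hyp V E using s conn h by unfold_locales auto
  show ?thesis unfolding arc_transitive_def using construct by blast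
qed

theorem theorem5p1:
  fixes V :: "'a set" and E :: "'a \<Rightarrow> 'a \<Rightarrow> bool"
  assumes "simple_graph V E" and "countable V" and "connectivity_one V E"
  shows "arc_transitive V E \<longleftrightarrow>
     ((\<forall>L\<in>lobes V E. arc_transitive (lobe_verts L) (lobe_adj L)) \<and>
      (\<forall>L1\<in>lobes V E. \<forall>L2\<in>lobes V E.
          graph_iso (lobe_verts L1) (lobe_adj L1) (lobe_verts L2) (lobe_adj L2)) \<and>
      (\<forall>u\<in>V. \<forall>v\<in>V. {L \<in> lobes V E. u \<in> lobe_verts L} \<approx> {L \<in> lobes V E. v \<in> lobe_verts L}))"
  using forward[OF assms(1) assms(3)] backward[OF assms(1) assms(3)] by blast

end
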